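(* Let $R$ be a commutative ring with unit and $\mathcal{A}_0$ the free $R$-module with basis the set of homotopy classes of homotopically non-trivial virtual strings. The $R$-linear map $\nu:\mathcal{A}_0\to\mathcal{A}_0\otimes\mathcal{A}_0$ given on generators by $\nu(\langle\alpha\rangle)=\sum_{e\in\operatorname{arr}(\alpha)}\big(\langle\alpha^1_e\rangle\otimes\langle\alpha^2_e\rangle-\langle\alpha^2_e\rangle\otimes\langle\alpha^1_e\rangle\big)$ is a well-defined Lie cobracket, and the Lie coalgebra $(\mathcal{A}_0,\nu)$ is spiral.
   Context: A virtual string $\alpha$ is an oriented circle $S$ with $2m$ distinct points partitioned into $m$ ordered pairs $(a,b)$ (arrows); for distinct $a,b$, $ab$ is the arc from $a$ to $b$ in the positive direction. Homotopy of strings is generated by homeomorphisms and the moves: (a) add $(a,b)$ with $ab$ free of endpoints; (b) for two disjoint endpoint-free arcs with endpoints $a,a'$ and $b,b'$ (any orders), add $(a,b)$ and $(b',a')$; (c) replace arrows $(a^+,b),(b^+,c),(c^+,a)$, where $aa^+,bb^+,cc^+$ are disjoint endpoint-free arcs, by $(a,b^+),(b,c^+),(c,a^+)$; and inverses. A string is homotopically trivial if homotopic to a string with no arrows. $\langle\alpha\rangle$ is the class of $\alpha$ in $\mathcal{A}_0$ if $\alpha$ is homotopically non-trivial and $0$ otherwise. For $e=(a,b)\in\operatorname{arr}(\alpha)$, $\alpha^1_e$ (resp. $\alpha^2_e$) is obtained from $\alpha$ by removing all arrows except those with both endpoints in the interior of $ab$ (resp. of $ba$). A Lie cobracket on an $R$-module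 $A$ is an $R$-linear $\nu:A\to A\otimes A$ with $P\circ\nu=-\nu$ ($P(x\otimes y)=y\otimes x$) and $(\mathrm{id}+\tau+\tau^2)\circ(\mathrm{id}\otimes\nu)\circ\nu=0$, where $\tau(x\otimes y\otimes z)=z\otimes x\otimes y$. $(A,\nu)$ is spiral if $A$ is free and $A=\bigcup_{n\ge1}\ker\nu^{(n)}$, where $\nu^{(n)}=(\mathrm{id}^{\otimes(n-1)}\otimes\nu)\circ\cdots\circ(\mathrm{id}\otimes\nu)\circ\nu$. *)

theory Defs
  imports Main
begin

text \<open>A virtual string with m arrows is encoded by a word of length 2m listing the
  2m distinguished points of the oriented circle in positive cyclic order, starting
  at an arbitrary point.  The letter (e, True) is the tail (first point) of arrow e,
  the letter (e, False) its head (second point).  Arrow names are irrelevant, and so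
  is the starting point: both are absorbed by the homotopy relation (renaming and
  rotation are orientation-preserving homeomorphisms).\<close>

type_synonym vword = "(nat \<times> bool) list"

definition vstring :: "vword \<Rightarrow> bool" where
  "vstring w \<longleftrightarrow> distinct w \<and> (\<forall>e b. (e, b) \<in> set w \<longrightarrow> (e, \<not> b) \<in> set w)"

definition arr :: "vword \<Rightarrow> nat set" where
  "arr w = {e. (e, True) \<in> set w}"

definition pos :: "vword \<Rightarrow> nat \<times> bool \<Rightarrow> nat" where
  "pos w x = (THE i. i < length w \<and> w ! i = x)"

definition in_arc :: "nat \<Rightarrow> nat \<Rightarrow> nat \<Rightarrow> bool" where
  "in_arc p q k \<longleftrightarrow> (if p < q then p < k \<and> k < q else p < k \<or> k < q)"

definition keep_arc :: "vword \<Rightarrow> nat \<Rightarrow> nat \<Rightarrow> vword" where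
  "keep_arc w p q = filter (\<lambda>(f, b). in_arc p q (pos w (f, True)) \<and> in_arc p q (pos w (f, False))) w"

text \<open>For e = (a,b): sub1 = alpha^1_e (arrows inside ab), sub2 = alpha^2_e (inside ba).\<close>
definition sub1 :: "vword \<Rightarrow> nat \<Rightarrow> vword" where
  "sub1 w e = keep_arc w (pos w (e, True)) (pos w (e, False))"

definition sub2 :: "vword \<Rightarrow> nat \<Rightarrow> vword" where
  "sub2 w e = keep_arc w (pos w (e, False)) (pos w (e, True))"

inductive hstep :: "vword \<Rightarrow> vword \<Rightarrow> bool" where
  rot: "vstring w \<Longrightarrow> hstep w (rotate1 w)"
| ren: "vstring w \<Longrightarrow> inj f \<Longrightarrow> hstep w (map (\<lambda>(e, b). (f e, b)) w)"
| move_a: "vstring (u @ v) \<Longrightarrow> e \<notin> fst ` set (u @ v) \<Longrightarrow>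
     hstep (u @ v) (u @ [(e, True), (e, False)] @ v)"
| move_b: "vstring (u @ v) \<Longrightarrow> e1 \<notin> fst ` set (u @ v) \<Longrightarrow> e2 \<notin> fst ` set (u @ v) \<Longrightarrow>
     e1 \<noteq> e2 \<Longrightarrow>
     xs \<in> {[(e1, True), (e2, False)], [(e2, False), (e1, True)]} \<Longrightarrow>
     ys \<in> {[(e1, False), (e2, True)], [(e2, True), (e1, False)]} \<Longrightarrow>
     hstep (u @ v) (xs @ u @ ys @ v)"
| move_c1: "vstring ([(e3, False), (e1, True)] @ u @ [(e1, False), (e2, True)] @ v @ [(e2, False), (e3, True)] @ x) \<Longrightarrow>
     hstep ([(e3, False), (e1, True)] @ u @ [(e1, False), (e2, True)] @ v @ [(e2, False), (e3, True)] @ x)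
           ([(e1, True), (e3, False)] @ u @ [(e2, True), (e1, False)] @ v @ [(e3, True), (e2, False)] @ x)"
| move_c2: "vstring ([(e3, False), (e1, True)] @ u @ [(e2, False), (e3, True)] @ v @ [(e1, False), (e2, True)] @ x) \<Longrightarrow>
     hstep ([(e3, False), (e1, True)] @ u @ [(e2, False), (e3, True)] @ v @ [(e1, False), (e2, True)] @ x)
           ([(e1, True), (e3, False)] @ u @ [(e3, True), (e2, False)] @ v @ [(e2, True), (e1, False)] @ x)"

definition homotopic :: "vword \<Rightarrow> vword \<Rightarrow> bool" where
  "homotopic = (\<lambda>x y. hstep x y \<or> hstep y x)\<^sup>*\<^sup>*"

definition htrivial :: "vword \<Rightarrow> bool" where
  "htrivial w \<longleftrightarrow> homotopic w []"

definition cls :: "vword \<Rightarrow> vword set" where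
  "cls w = {w'. homotopic w w'}"

definition NT :: "vword set set" where
  "NT = {cls w | w. vstring w \<and> \<not> htrivial w}"

text \<open>Since A_0 is free on NT, its k-th tensor power over R is the free module on
  NT^k; we represent its elements as finitely supported coefficient functions on
  lists of length k of basis elements (the list [c1,..,ck] standing for c1 \<otimes> .. \<otimes> ck).\<close>

type_synonym 'r tensor = "vword set list \<Rightarrow> 'r"

definition tensor_space :: "nat \<Rightarrow> ('r::comm_ring_1) tensor set" where
  "tensor_space k = {f. finite {ys. f ys \<noteq> 0} \<and>
      (\<forall>ys. f ys \<noteq> 0 \<longrightarrow> length ys = k \<and> set ys \<subseteq> NT)}"

abbreviation A0 :: "('r::comm_ring_1) tensor set" where
  "A0 \<equiv> tensor_space 1"

text \<open>The generator \<langle>alpha\<rangle> of A_0 (0 if alpha is trivial).\<close>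
definition gen :: "vword \<Rightarrow> ('r::comm_ring_1) tensor" where
  "gen w ys = (if \<not> htrivial w \<and> ys = [cls w] then 1 else 0)"

definition gen2 :: "vword \<Rightarrow> vword \<Rightarrow> ('r::comm_ring_1) tensor" where
  "gen2 b c ys = (if \<not> htrivial b \<and> \<not> htrivial c \<and> ys = [cls b, cls c] then 1 else 0)"

definition nu_gen :: "vword \<Rightarrow> ('r::comm_ring_1) tensor" where
  "nu_gen w = (\<lambda>ys. \<Sum>e\<in>arr w. gen2 (sub1 w e) (sub2 w e) ys - gen2 (sub2 w e) (sub1 w e) ys)"

definition nu_cls :: "vword set \<Rightarrow> ('r::comm_ring_1) tensor" where
  "nu_cls c = nu_gen (SOME w. w \<in> c \<and> vstring w)"

text \<open>id^{\<otimes>(k-1)} \<otimes> nu : A_0^{\<otimes>k} \<rightarrow> A_0^{\<otimes>(k+1)}, the R-linear extension of nu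
  applied to the last tensor factor.  For k = 1 this is nu itself.\<close>
definition nu_last :: "('r::comm_ring_1) tensor \<Rightarrow> 'r tensor" where
  "nu_last f ys = (if 2 \<le> length ys then
      (\<Sum>c\<in>{c. f (take (length ys - 2) ys @ [c]) \<noteq> 0}.
          f (take (length ys - 2) ys @ [c]) * nu_cls c (drop (length ys - 2) ys))
    else 0)"

definition nu_pow :: "nat \<Rightarrow> ('r::comm_ring_1) tensor \<Rightarrow> 'r tensor" where
  "nu_pow n = nu_last ^^ n"

end

theory Submission
  imports Defs
begin


lemma pos_eq: "distinct w \<Longrightarrow> i < length w \<Longrightarrow> w ! i = x \<Longrightarrow> pos w x = i"
  unfolding pos_def by (rule the_equality) (auto simp: nth_eq_iff_index_eq)

lemma pos_prop: "distinct w \<Longrightarrow> x \<in> set w \<Longrightarrow> pos w x < length w \<and> w ! pos w x = x"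
proof -
  assume d: "distinct w" and x: "x \<in> set w"
  then obtain i where i: "i < length w" "w ! i = x" by (auto simp: in_set_conv_nth)
  then have "pos w x = i" using pos_eq d by blast
  then show ?thesis using i by simp
qed

lemma pos_lt: "distinct w \<Longrightarrow> x \<in> set w \<Longrightarrow> pos w x < length w"
  using pos_prop by blast

lemma pos_nth: "distinct w \<Longrightarrow> x \<in> set w \<Longrightarrow> w ! pos w x = x"
  using pos_prop by blast

lemma pos_inj: "distinct w \<Longrightarrow> x \<in> set w \<Longrightarrow> y \<in> set w \<Longrightarrow> pos w x = pos w y \<Longrightarrow> x = y"
  by (metis pos_nth)

lemma pos_append1: "distinct (xs @ ys) \<Longrightarrow> x \<in> set xs \<Longrightarrow> pos (xs @ ys) x = pos xs x"
  apply (rule pos_eq)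
  using pos_prop[of xs x] by (auto simp: nth_append)

lemma pos_append2: "distinct (xs @ ys) \<Longrightarrow> y \<in> set ys \<Longrightarrow> pos (xs @ ys) y = length xs + pos ys y"
  apply (rule pos_eq)
  using pos_prop[of ys y] by (auto simp: nth_append)

lemma pos_Cons0: "distinct (a # w) \<Longrightarrow> pos (a # w) a = 0"
  by (rule pos_eq) auto

lemma pos_ConsS: "distinct (a # w) \<Longrightarrow> x \<in> set w \<Longrightarrow> pos (a # w) x = Suc (pos w x)"
  using pos_append2[of "[a]" w x] by simp

lemma pos_filter_less:
  "distinct w \<Longrightarrow> x \<in> set (filter P w) \<Longrightarrow> y \<in> set (filter P w) \<Longrightarrow>
   (pos (filter P w) x < pos (filter P w) y) = (pos w x < pos w y)"
proof (induction w)
  case Nil then show ?case by simp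
next
  case (Cons a w)
  show ?case
  proof (cases "P a")
    case True
    have d2: "distinct (a # filter P w)" using Cons.prems True by auto
    have fe: "filter P (a # w) = a # filter P w" using True by simp
    show ?thesis
      using Cons.prems Cons.IH fe d2
      by (cases "x = a"; cases "y = a")
         (auto simp: pos_Cons0 pos_ConsS)
  next
    case False
    then show ?thesis using Cons.prems Cons.IH
      by (cases "x = a"; cases "y = a") (auto simp: pos_ConsS)
  qed
qed

lemma in_arc_cong:
  "(p < q) = (p' < q') \<Longrightarrow> (q < p) = (q' < p') \<Longrightarrow> (p < k) = (p' < k') \<Longrightarrow>
   (k < p) = (k' < p') \<Longrightarrow> (q < k) = (q' < k') \<Longrightarrow> (k < q) = (k' < q') \<Longrightarrow>
   in_arc p q k = in_arc p' q' k'"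
  unfolding in_arc_def by auto

definition btw :: "vword \<Rightarrow> nat \<times> bool \<Rightarrow> nat \<times> bool \<Rightarrow> nat \<times> bool \<Rightarrow> bool" where
  "btw w x y z = in_arc (pos w x) (pos w y) (pos w z)"

lemma btw_filter:
  assumes d: "distinct w" and xyz: "x \<in> set (filter P w)" "y \<in> set (filter P w)" "z \<in> set (filter P w)"
  shows "btw (filter P w) x y z = btw w x y z"
  unfolding btw_def
  apply (rule in_arc_cong)
  using pos_filter_less[OF d] xyz by blast+

lemma vstring_filter: "vstring w \<Longrightarrow> vstring (filter (\<lambda>(f, b). K f) w)"
  unfolding vstring_def by auto

lemma finite_arr: "finite (arr w)"
proof -
  have "arr w \<subseteq> fst ` set w" unfolding arr_def by force
  then show ?thesis using finite_subset by blast
qed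

lemma homotopic_refl: "homotopic x x"
  unfolding homotopic_def by simp

lemma homotopic_sym: "homotopic x y \<Longrightarrow> homotopic y x"
  unfolding homotopic_def
  by (rule symp_rtranclp[THEN sympD]) (auto simp: symp_def)

lemma homotopic_trans: "homotopic x y \<Longrightarrow> homotopic y z \<Longrightarrow> homotopic x z"
  unfolding homotopic_def by simp

lemma hstep_hom: "hstep x y \<Longrightarrow> homotopic x y"
  unfolding homotopic_def by auto

lemma hstep_hom': "hstep y x \<Longrightarrow> homotopic x y"
  unfolding homotopic_def by auto

lemma cls_eq: "homotopic x y \<Longrightarrow> cls x = cls y"
  unfolding cls_def using homotopic_sym homotopic_trans by blast

lemma htrivial_eq: "homotopic x y \<Longrightarrow> htrivial x = htrivial y"
  unfolding htrivial_def using homotopic_sym homotopic_trans by blast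

lemma gen2_hom: "homotopic b b' \<Longrightarrow> homotopic c c' \<Longrightarrow> gen2 b c = gen2 b' c'"
  unfolding gen2_def using cls_eq htrivial_eq by presburger

lemma htrivial_Nil: "htrivial []"
  unfolding htrivial_def by (rule homotopic_refl)

lemma gen2_Nil1: "gen2 [] c = (\<lambda>_. 0)"
  unfolding gen2_def using htrivial_Nil by auto

lemma gen2_Nil2: "gen2 b [] = (\<lambda>_. 0)"
  unfolding gen2_def using htrivial_Nil by auto


definition in1 :: "vword \<Rightarrow> nat \<Rightarrow> nat \<Rightarrow> bool" where
  "in1 w e f \<longleftrightarrow> btw w (e, True) (e, False) (f, True) \<and> btw w (e, True) (e, False) (f, False)"
definition in2 :: "vword \<Rightarrow> nat \<Rightarrow> nat \<Rightarrow> bool" where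
  "in2 w e f \<longleftrightarrow> btw w (e, False) (e, True) (f, True) \<and> btw w (e, False) (e, True) (f, False)"

lemma sub1_eq: "sub1 w e = filter (\<lambda>(f, b). in1 w e f) w"
  unfolding sub1_def keep_arc_def in1_def btw_def by simp
lemma sub2_eq: "sub2 w e = filter (\<lambda>(f, b). in2 w e f) w"
  unfolding sub2_def keep_arc_def in2_def btw_def by simp

definition T :: "vword \<Rightarrow> nat \<Rightarrow> ('r::comm_ring_1) tensor" where
  "T w e = (\<lambda>ys. gen2 (sub1 w e) (sub2 w e) ys - gen2 (sub2 w e) (sub1 w e) ys)"

lemma nu_gen_T: "nu_gen w = (\<lambda>ys. \<Sum>e\<in>arr w. T w e ys)"
  unfolding nu_gen_def T_def by simp

lemma T_hom: "homotopic (sub1 w e) (sub1 w' e') \<Longrightarrow> homotopic (sub2 w e) (sub2 w' e') \<Longrightarrow> T w e = T w' e'"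
proof -
  assume a: "homotopic (sub1 w e) (sub1 w' e')" "homotopic (sub2 w e) (sub2 w' e')"
  show ?thesis unfolding T_def by (simp add: gen2_hom[OF a(1) a(2)] gen2_hom[OF a(2) a(1)])
qed

lemma T_swap: "homotopic (sub1 w e) (sub2 w' e') \<Longrightarrow> homotopic (sub2 w e) (sub1 w' e') \<Longrightarrow>
   (\<lambda>ys. T w e ys + T w' e' ys) = (\<lambda>_. 0)"
proof -
  assume a: "homotopic (sub1 w e) (sub2 w' e')" "homotopic (sub2 w e) (sub1 w' e')"
  show ?thesis unfolding T_def by (simp add: gen2_hom[OF a(1) a(2)] gen2_hom[OF a(2) a(1)])
qed

lemma T_Nil1: "sub1 w e = [] \<Longrightarrow> T w e = (\<lambda>_. 0)"
  unfolding T_def by (simp add: gen2_Nil1 gen2_Nil2)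

lemma vstring_distinct: "vstring w \<Longrightarrow> distinct w"
  unfolding vstring_def by simp

lemma vstring_partner: "vstring w \<Longrightarrow> (f, b) \<in> set w \<Longrightarrow> (f, \<not> b) \<in> set w"
  unfolding vstring_def by blast

lemma vstring_partner': "vstring w \<Longrightarrow> (f, b) \<in> set w \<Longrightarrow> (f, True) \<in> set w \<and> (f, False) \<in> set w"
  using vstring_partner[of w f b] by (cases b) auto

lemma arr_iff: "vstring w \<Longrightarrow> e \<in> arr w \<longleftrightarrow> (e, False) \<in> set w"
  unfolding arr_def using vstring_partner[of w e True] vstring_partner[of w e False] by auto

lemma arr_fst: assumes v: "vstring w" shows "arr w = fst ` set w"
  unfolding arr_def
proof
  show "{e. (e, True) \<in> set w} \<subseteq> fst ` set w" by force
  show "fst ` set w \<subseteq> {e. (e, True) \<in> set w}" using vstring_partner'[OF v] by auto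
qed

lemma vstring_perm: "vstring w \<Longrightarrow> distinct w' \<Longrightarrow> set w' = set w \<Longrightarrow> vstring w'"
  unfolding vstring_def by auto


lemma fresh_notin: "e \<notin> fst ` set w \<Longrightarrow> (e, b) \<notin> set w"
  by (metis fst_conv image_eqI)

lemma swap_vstring: "vstring l \<Longrightarrow> l = p @ [a, b] @ q \<Longrightarrow> l' = p @ [b, a] @ q \<Longrightarrow> vstring l'"
  unfolding vstring_def by auto

lemma vstring_c:
  assumes "vstring ([x1, x2] @ u @ [x3, x4] @ v @ [x5, x6] @ x)"
  shows "vstring ([x2, x1] @ u @ [x4, x3] @ v @ [x6, x5] @ x)"
proof -
  have 1: "vstring ([x2, x1] @ u @ [x3, x4] @ v @ [x5, x6] @ x)"
    by (rule swap_vstring[OF assms, of "[]"]) simp_all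
  have 2: "vstring ([x2, x1] @ u @ [x4, x3] @ v @ [x5, x6] @ x)"
    by (rule swap_vstring[OF 1, of "[x2, x1] @ u"]) simp_all
  show ?thesis
    by (rule swap_vstring[OF 2, of "[x2, x1] @ u @ [x4, x3] @ v"]) simp_all
qed

lemma hstep_vstring: "hstep x y \<Longrightarrow> vstring x \<and> vstring y"
proof (induction rule: hstep.induct)
  case (rot w) then show ?case by (simp add: vstring_def)
next
  case (ren w f)
  have inj: "inj (\<lambda>(e::nat, b::bool). (f e, b))"
    using ren(2) by (auto simp: inj_def)
  have "distinct (map (\<lambda>(e, b). (f e, b)) w)"
    using ren(1) inj by (simp add: distinct_map vstring_def inj_on_subset[OF inj])
  moreover have "\<forall>e b. (e, b) \<in> set (map (\<lambda>(e, b). (f e, b)) w) \<longrightarrow> (e, \<not> b) \<in> set (map (\<lambda>(e, b). (f e, b)) w)"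
    using ren(1) unfolding vstring_def by force
  ultimately show ?case using ren unfolding vstring_def by blast
next
  case (move_a u v e)
  have n: "\<And>b. (e, b) \<notin> set (u @ v)" using fresh_notin[OF move_a(2)] by blast
  show ?case using move_a(1) n unfolding vstring_def by auto
next
  case (move_b u v e1 e2 xs ys)
  have n1: "\<And>b. (e1, b) \<notin> set (u @ v)" using fresh_notin[OF move_b(2)] by blast
  have n2: "\<And>b. (e2, b) \<notin> set (u @ v)" using fresh_notin[OF move_b(3)] by blast
  have d: "distinct (u @ v)" using move_b(1) by (simp add: vstring_def)
  have "distinct (xs @ u @ ys @ v)"
    using move_b(4,5,6) d n1 n2 by auto
  moreover have "\<forall>e b. (e, b) \<in> set (xs @ u @ ys @ v) \<longrightarrow> (e, \<not> b) \<in> set (xs @ u @ ys @ v)"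
    using move_b(1,5,6) unfolding vstring_def by auto
  ultimately show ?case using move_b unfolding vstring_def by blast
next
  case (move_c1 e3 e1 u e2 v x)
  then show ?case using vstring_c by blast
next
  case (move_c2 e3 e1 u e2 v x)
  then show ?case using vstring_c by blast
qed

lemma homotopic_vstring: "homotopic x y \<Longrightarrow> vstring x \<Longrightarrow> vstring y"
  unfolding homotopic_def
  by (induction rule: rtranclp_induct) (auto dest: hstep_vstring)


lemma in_arc_rot: "p \<le> n \<Longrightarrow> q \<le> n \<Longrightarrow> k \<le> n \<Longrightarrow>
  in_arc (if p = 0 then n else p - 1) (if q = 0 then n else q - 1) (if k = 0 then n else k - 1) = in_arc p q k"
  unfolding in_arc_def by (cases "p = 0"; cases "q = 0"; cases "k = 0") auto

lemma pos_rotate1: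
  assumes d: "distinct w" and x: "x \<in> set w"
  shows "pos (rotate1 w) x = (if pos w x = 0 then length w - 1 else pos w x - 1)"
proof (cases w)
  case Nil then show ?thesis using x by simp
next
  case (Cons a r)
  have d': "distinct (r @ [a])" using d Cons by simp
  show ?thesis
  proof (cases "x = a")
    case True
    then show ?thesis using pos_append2[OF d', of a] pos_Cons0[of a r] d Cons
      by (simp add: pos_eq)
  next
    case False
    then have xr: "x \<in> set r" using x Cons by simp
    then show ?thesis using pos_append1[OF d' xr] pos_ConsS[of a r x] d Cons
      by simp
  qed
qed

lemma btw_rotate1:
  assumes d: "distinct w" and xyz: "x \<in> set w" "y \<in> set w" "z \<in> set w"
  shows "btw (rotate1 w) x y z = btw w x y z"
proof -
  have ne: "w \<noteq> []" using xyz by auto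
  show ?thesis
    unfolding btw_def pos_rotate1[OF d xyz(1)] pos_rotate1[OF d xyz(2)] pos_rotate1[OF d xyz(3)]
    apply (rule in_arc_rot)
    using pos_lt[OF d] xyz ne by (auto simp: less_Suc_eq_le[symmetric])
qed

lemma filter_rotate1_hom:
  assumes v: "vstring (filter P w)"
  shows "homotopic (filter P w) (filter P (rotate1 w))"
proof (cases w)
  case Nil then show ?thesis by (simp add: homotopic_refl)
next
  case (Cons a r)
  show ?thesis
  proof (cases "P a")
    case True
    then have "filter P (rotate1 w) = rotate1 (filter P w)" using Cons by simp
    then show ?thesis using hstep.rot[OF v] hstep_hom by simp
  next
    case False
    then show ?thesis using Cons by (simp add: homotopic_refl)
  qed
qed

lemma in1_rotate1: "vstring w \<Longrightarrow> e \<in> arr w \<Longrightarrow> (f, b) \<in> set w \<Longrightarrow> in1 (rotate1 w) e f = in1 w e f"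
  unfolding in1_def using btw_rotate1[of w] vstring_distinct vstring_partner' arr_iff
  by (metis (no_types, lifting) arr_def mem_Collect_eq)

lemma in2_rotate1: "vstring w \<Longrightarrow> e \<in> arr w \<Longrightarrow> (f, b) \<in> set w \<Longrightarrow> in2 (rotate1 w) e f = in2 w e f"
  unfolding in2_def using btw_rotate1[of w] vstring_distinct vstring_partner' arr_iff
  by (metis (no_types, lifting) arr_def mem_Collect_eq)

lemma nu_gen_rot: "vstring w \<Longrightarrow> (nu_gen (rotate1 w) :: ('r::comm_ring_1) tensor) = nu_gen w"
proof -
  assume v: "vstring w"
  have "T (rotate1 w) e = (T w e :: 'r tensor)" if e: "e \<in> arr w" for e
  proof (rule T_hom)
    have "sub1 (rotate1 w) e = filter (\<lambda>(f, b). in1 w e f) (rotate1 w)"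
      unfolding sub1_eq by (rule filter_cong) (auto simp: in1_rotate1[OF v e])
    then show "homotopic (sub1 (rotate1 w) e) (sub1 w e)"
      using filter_rotate1_hom[of "\<lambda>(f, b). in1 w e f" w] vstring_filter[OF v] homotopic_sym
      unfolding sub1_eq by metis
    have "sub2 (rotate1 w) e = filter (\<lambda>(f, b). in2 w e f) (rotate1 w)"
      unfolding sub2_eq by (rule filter_cong) (auto simp: in2_rotate1[OF v e])
    then show "homotopic (sub2 (rotate1 w) e) (sub2 w e)"
      using filter_rotate1_hom[of "\<lambda>(f, b). in2 w e f" w] vstring_filter[OF v] homotopic_sym
      unfolding sub2_eq by metis
  qed
  moreover have "arr (rotate1 w) = arr w" unfolding arr_def by simp
  ultimately show ?thesis unfolding nu_gen_T by (metis (no_types, lifting) sum.cong)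
qed


lemma pos_map_inj:
  assumes d: "distinct w" and g: "inj g" and x: "x \<in> set w"
  shows "pos (map g w) (g x) = pos w x"
  apply (rule pos_eq)
  using d g pos_prop[OF d x] by (auto simp: distinct_map inj_on_subset[OF g])

lemma nu_gen_ren:
  assumes v: "vstring w" and f: "inj f"
  shows "(nu_gen (map (\<lambda>(e, b). (f e, b)) w) :: ('r::comm_ring_1) tensor) = nu_gen w"
proof -
  define g where "g = (\<lambda>(e::nat, b::bool). (f e, b))"
  have g: "inj g" using f by (auto simp: inj_def g_def)
  have gs: "g (h, b) = (f h, b)" for h b unfolding g_def by simp
  have d: "distinct w" using v vstring_distinct by blast
  let ?w = "map g w"
  have btw: "btw ?w (g x) (g y) (g z) = btw w x y z" if "x \<in> set w" "y \<in> set w" "z \<in> set w" for x y z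
    unfolding btw_def using pos_map_inj[OF d g] that by simp
  have arrw: "arr ?w = f ` arr w"
    unfolding arr_def g_def by force
  have inx: "in1 ?w (f e) (f h) = in1 w e h" "in2 ?w (f e) (f h) = in2 w e h"
    if e: "e \<in> arr w" and h: "(h, b) \<in> set w" for e h b
  proof -
    have "(e, True) \<in> set w" "(e, False) \<in> set w" using e v arr_iff arr_def by auto
    moreover have "(h, True) \<in> set w" "(h, False) \<in> set w" using vstring_partner'[OF v h] by auto
    ultimately show "in1 ?w (f e) (f h) = in1 w e h" "in2 ?w (f e) (f h) = in2 w e h"
      unfolding in1_def in2_def using btw gs by metis+
  qed
  have sub: "sub1 ?w (f e) = map g (sub1 w e)" "sub2 ?w (f e) = map g (sub2 w e)" if e: "e \<in> arr w" for e
  proof -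
    show "sub1 ?w (f e) = map g (sub1 w e)" unfolding sub1_eq filter_map
      by (rule arg_cong[where f = "map g"], rule filter_cong) (auto simp: gs inx[OF e])
    show "sub2 ?w (f e) = map g (sub2 w e)" unfolding sub2_eq filter_map
      by (rule arg_cong[where f = "map g"], rule filter_cong) (auto simp: gs inx[OF e])
  qed
  have T: "T ?w (f e) = (T w e :: 'r tensor)" if e: "e \<in> arr w" for e
  proof (rule T_hom)
    show "homotopic (sub1 ?w (f e)) (sub1 w e)" unfolding sub[OF e]
      using hstep.ren[OF vstring_filter[OF v] f] unfolding sub1_eq g_def by (rule hstep_hom')
    show "homotopic (sub2 ?w (f e)) (sub2 w e)" unfolding sub[OF e]
      using hstep.ren[OF vstring_filter[OF v] f] unfolding sub2_eq g_def by (rule hstep_hom')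
  qed
  have "inj_on f (arr w)" using f inj_on_subset by blast
  then have "(\<lambda>ys. \<Sum>e\<in>arr ?w. (T ?w e ys :: 'r)) = (\<lambda>ys. \<Sum>e\<in>arr w. T w e ys)"
    unfolding arrw using T by (simp add: sum.reindex)
  then show ?thesis unfolding nu_gen_T g_def .
qed


lemma btw_adj:
  assumes d: "distinct (p @ [x1, x2] @ q)" and z: "z1 \<in> set (p @ q)" "z2 \<in> set (p @ q)"
  shows "btw (p @ [x1, x2] @ q) z1 z2 x1 = btw (p @ [x1, x2] @ q) z1 z2 x2"
proof -
  let ?w = "p @ [x1, x2] @ q"
  have p1: "pos ?w x1 = length p" using pos_append2[OF d, of x1] d pos_Cons0[of x1 "x2 # q"] by simp
  have p2: "pos ?w x2 = Suc (length p)"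
    using pos_append2[OF d, of x2] d pos_ConsS[of x1 "x2 # q" x2] pos_Cons0[of x2 q] by simp
  have n: "pos ?w z \<noteq> length p \<and> pos ?w z \<noteq> Suc (length p)" if "z \<in> set (p @ q)" for z
  proof -
    have "z \<noteq> x1" "z \<noteq> x2" using d that by auto
    then show ?thesis using p1 p2 pos_inj[OF d, of z x1] pos_inj[OF d, of z x2] that by auto
  qed
  show ?thesis unfolding btw_def p1 p2 using n[OF z(1)] n[OF z(2)]
    unfolding in_arc_def by auto
qed

lemma homotopic_rot_app: "vstring (a @ b) \<Longrightarrow> homotopic (a @ b) (b @ a)"
proof (induction a arbitrary: b)
  case Nil then show ?case by (simp add: homotopic_refl)
next
  case (Cons x a)
  have "hstep (x # a @ b) (a @ b @ [x])" using hstep.rot[OF Cons.prems] by simp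
  moreover have "vstring (a @ (b @ [x]))"
    using hstep_vstring[OF hstep.rot[OF Cons.prems]] by simp
  then have "homotopic (a @ (b @ [x])) ((b @ [x]) @ a)" using Cons.IH by blast
  ultimately show ?case using hstep_hom homotopic_trans by fastforce
qed

lemma kink_fwd: "vstring (p @ q) \<Longrightarrow> e \<notin> fst ` set (p @ q) \<Longrightarrow>
   homotopic (p @ [(e, True), (e, False)] @ q) (p @ q)"
  using hstep.move_a hstep_hom' by blast

lemma kink_rev:
  assumes v: "vstring (p @ q)" and e: "e \<notin> fst ` set (p @ q)"
  shows "homotopic (p @ [(e, False), (e, True)] @ q) (p @ q)"
proof -
  obtain f where f: "f \<notin> fst ` set (p @ q)" "f \<noteq> e"
    using ex_new_if_finite[of "insert e (fst ` set (p @ q))"] by auto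
  have vq: "vstring (q @ p)" using homotopic_vstring[OF homotopic_rot_app[OF v] v] .
  have "hstep ([] @ (q @ p)) ([(e, False), (f, True)] @ [] @ [(f, False), (e, True)] @ (q @ p))"
    by (rule hstep.move_b) (use vq f e in auto)
  then have h1: "homotopic (q @ p) ([(e, False), (f, True), (f, False), (e, True)] @ q @ p)"
    using hstep_hom by simp
  have v2: "vstring ([(e, False), (e, True)] @ q @ p)"
  proof -
    have "\<And>b. (e, b) \<notin> set (q @ p)" using fresh_notin[of e "q @ p"] e by auto
    then show ?thesis using vq unfolding vstring_def by auto
  qed
  have "hstep ([(e, False)] @ ((e, True) # q @ p)) ([(e, False)] @ [(f, True), (f, False)] @ ((e, True) # q @ p))"
    apply (rule hstep.move_a)
    using v2 f by auto
  then have h2: "homotopic ([(e, False), (e, True)] @ q @ p) ([(e, False), (f, True), (f, False), (e, True)] @ q @ p)"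
    using hstep_hom by simp
  have h3: "homotopic ([(e, False), (e, True)] @ q @ p) (q @ p)"
    using h1 h2 homotopic_sym homotopic_trans by blast
  have h4: "homotopic (p @ [(e, False), (e, True)] @ q) (([(e, False), (e, True)] @ q) @ p)"
    apply (rule homotopic_rot_app)
    using homotopic_vstring[OF homotopic_rot_app[of "[(e, False), (e, True)] @ q" p]] v2 by simp
  have h5: "homotopic (q @ p) (p @ q)" using homotopic_rot_app[OF vq] .
  show ?thesis using h3 h4 h5 homotopic_trans by (metis append_assoc)
qed


lemma in_old:
  assumes v: "vstring w'" and w: "w = filter (\<lambda>(h, b). Q h) w'" and g: "(g, True) \<in> set w"
    and h: "(h, b) \<in> set w"
  shows "in1 w' g h = in1 w g h \<and> in2 w' g h = in2 w g h"
proof -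
  have vw: "vstring w" using vstring_filter[OF v] w by simp
  have d: "distinct w'" using v vstring_distinct by blast
  have s: "(g, True) \<in> set w" "(g, False) \<in> set w" "(h, True) \<in> set w" "(h, False) \<in> set w"
    using vstring_partner'[OF vw g] vstring_partner'[OF vw h] by auto
  show ?thesis unfolding in1_def in2_def w using btw_filter[OF d] s unfolding w by metis
qed

lemma sub_old:
  assumes v: "vstring w'" and w: "w = filter (\<lambda>(h, b). Q h) w'" and g: "g \<in> arr w"
  shows "sub1 w' g = filter (\<lambda>(h, b). if Q h then in1 w g h else in1 w' g h) w'"
        "sub2 w' g = filter (\<lambda>(h, b). if Q h then in2 w g h else in2 w' g h) w'"
proof -
  have g': "(g, True) \<in> set w" using g unfolding arr_def by simp
  have vw: "vstring w" using vstring_filter[OF v] w by simp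
  have *: "in1 w' g h = in1 w g h" "in2 w' g h = in2 w g h" if "(h, b) \<in> set w'" "Q h" for h b
  proof -
    have "(h, b) \<in> set w" using that w by auto
    then show "in1 w' g h = in1 w g h" "in2 w' g h = in2 w g h" using in_old[OF v w g'] by auto
  qed
  show "sub1 w' g = filter (\<lambda>(h, b). if Q h then in1 w g h else in1 w' g h) w'"
    unfolding sub1_eq
  proof (rule filter_cong)
    fix x assume x: "x \<in> set w'"
    obtain h b where xe: "x = (h, b)" by (cases x)
    show "(case x of (h, b) \<Rightarrow> in1 w' g h) = (case x of (h, b) \<Rightarrow> if Q h then in1 w g h else in1 w' g h)"
      using *(1)[of h b] x xe by auto
  qed simp
  show "sub2 w' g = filter (\<lambda>(h, b). if Q h then in2 w g h else in2 w' g h) w'"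
    unfolding sub2_eq
  proof (rule filter_cong)
    fix x assume x: "x \<in> set w'"
    obtain h b where xe: "x = (h, b)" by (cases x)
    show "(case x of (h, b) \<Rightarrow> in2 w' g h) = (case x of (h, b) \<Rightarrow> if Q h then in2 w g h else in2 w' g h)"
      using *(2)[of h b] x xe by auto
  qed simp
qed

lemma filter_old_part:
  assumes "\<And>h b. (h, b) \<in> set u \<Longrightarrow> Q h"
  shows "filter (\<lambda>(h, b). if Q h then A h else B h) u = filter (\<lambda>(h, b). A h) u"
  by (rule filter_cong) (use assms in auto)

lemma nu_gen_move_a:
  assumes v: "vstring (u @ v)" and e: "e \<notin> fst ` set (u @ v)"
  shows "(nu_gen (u @ [(e, True), (e, False)] @ v) :: ('r::comm_ring_1) tensor) = nu_gen (u @ v)"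
proof -
  let ?w = "u @ v" and ?w' = "u @ [(e, True), (e, False)] @ v"
  have hs: "hstep ?w ?w'" using hstep.move_a[OF v e] .
  have v': "vstring ?w'" using hstep_vstring[OF hs] by blast
  have d': "distinct ?w'" using v' vstring_distinct by blast
  have ne: "\<And>b. (e, b) \<notin> set ?w" using fresh_notin[OF e] by blast
  have ne2: "\<And>h b. (h, b) \<in> set ?w \<Longrightarrow> h \<noteq> e" using ne by blast
  have filt: "?w = filter (\<lambda>(h, b). h \<noteq> e) ?w'"
  proof -
    have "filter (\<lambda>(h, b). h \<noteq> e) u = u" "filter (\<lambda>(h, b). h \<noteq> e) v = v"
      using ne2 by (auto intro!: filter_True)
    then show ?thesis by simp
  qed
  have arr': "arr ?w' = insert e (arr ?w)" unfolding arr_def by auto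
  have enot: "e \<notin> arr ?w" unfolding arr_def using ne by auto
  have s1e: "sub1 ?w' e = []"
  proof -
    have pe: "pos ?w' (e, True) = length u" "pos ?w' (e, False) = Suc (length u)"
      using pos_append2[OF d', of "(e, True)"] pos_append2[OF d', of "(e, False)"] d'
        pos_Cons0[of "(e, True)" "(e, False) # v"] pos_ConsS[of "(e, True)" "(e, False) # v" "(e, False)"]
        pos_Cons0[of "(e, False)" v] by auto
    have "\<not> in1 ?w' e h" for h unfolding in1_def btw_def pe in_arc_def by auto
    then show ?thesis unfolding sub1_eq by (simp add: filter_empty_conv)
  qed
  have Te: "T ?w' e = (\<lambda>_. 0::'r)" using T_Nil1[OF s1e] .
  have Tg: "T ?w' g = (T ?w g :: 'r tensor)" if g: "g \<in> arr ?w" for g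
  proof -
    have gne: "g \<noteq> e" using g enot by auto
    have gs: "(g, True) \<in> set ?w" "(g, False) \<in> set ?w"
      using g vstring_partner'[OF v, of g True] unfolding arr_def by auto
    have adj: "btw ?w' x y (e, True) = btw ?w' x y (e, False)" if "x \<in> set ?w" "y \<in> set ?w" for x y
      using btw_adj[of u "(e, True)" "(e, False)" v x y] d' that by simp
    have in1e: "in1 ?w' g e = btw ?w' (g, True) (g, False) (e, True)"
      unfolding in1_def using adj[OF gs] by simp
    have in2e: "in2 ?w' g e = btw ?w' (g, False) (g, True) (e, True)"
      unfolding in2_def using adj[OF gs(2) gs(1)] by simp
    have oldu: "\<And>h b. (h, b) \<in> set u \<Longrightarrow> h \<noteq> e" and oldv: "\<And>h b. (h, b) \<in> set v \<Longrightarrow> h \<noteq> e"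
      using ne2 by auto
    note so = sub_old[OF v' filt g]
    have vs1: "vstring (filter (\<lambda>(h, b). in1 ?w g h) u @ filter (\<lambda>(h, b). in1 ?w g h) v)"
      using vstring_filter[OF v, of "in1 ?w g"] by simp
    have vs2: "vstring (filter (\<lambda>(h, b). in2 ?w g h) u @ filter (\<lambda>(h, b). in2 ?w g h) v)"
      using vstring_filter[OF v, of "in2 ?w g"] by simp
    have ef1: "e \<notin> fst ` set (filter (\<lambda>(h, b). in1 ?w g h) u @ filter (\<lambda>(h, b). in1 ?w g h) v)"
      using e by auto
    have ef2: "e \<notin> fst ` set (filter (\<lambda>(h, b). in2 ?w g h) u @ filter (\<lambda>(h, b). in2 ?w g h) v)"
      using e by auto
    have s1: "sub1 ?w' g = filter (\<lambda>(h, b). in1 ?w g h) u @ filter (\<lambda>(h, b). if h \<noteq> e then in1 ?w g h else in1 ?w' g h) [(e, True), (e, False)] @ filter (\<lambda>(h, b). in1 ?w g h) v"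
      by (simp only: so filter_append filter_old_part[OF oldu] filter_old_part[OF oldv])
    have s2: "sub2 ?w' g = filter (\<lambda>(h, b). in2 ?w g h) u @ filter (\<lambda>(h, b). if h \<noteq> e then in2 ?w g h else in2 ?w' g h) [(e, True), (e, False)] @ filter (\<lambda>(h, b). in2 ?w g h) v"
      by (simp only: so filter_append filter_old_part[OF oldu] filter_old_part[OF oldv])
    show ?thesis
    proof (rule T_hom)
      show "homotopic (sub1 ?w' g) (sub1 ?w g)"
        unfolding s1 unfolding sub1_eq filter_append using kink_fwd[OF vs1 ef1] homotopic_refl by simp
      show "homotopic (sub2 ?w' g) (sub2 ?w g)"
        unfolding s2 unfolding sub2_eq filter_append using kink_fwd[OF vs2 ef2] homotopic_refl by simp
    qed
  qed
  have "(\<lambda>ys. \<Sum>g\<in>arr ?w'. (T ?w' g ys :: 'r)) = (\<lambda>ys. \<Sum>g\<in>arr ?w. T ?w g ys)"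
    unfolding arr' using finite_arr enot Te Tg by simp
  then show ?thesis unfolding nu_gen_T .
qed


lemma arcU: "t \<le> 1 \<Longrightarrow> n + 2 \<le> hh \<Longrightarrow> hh \<le> n + 3 \<Longrightarrow> (2 \<le> k \<and> k < n + 2) \<or> n + 4 \<le> k \<Longrightarrow>
  in_arc t hh k = (k < n + 2)"
  unfolding in_arc_def by auto

lemma arcV: "hh \<le> 1 \<Longrightarrow> n + 2 \<le> t \<Longrightarrow> t \<le> n + 3 \<Longrightarrow> (2 \<le> k \<and> k < n + 2) \<or> n + 4 \<le> k \<Longrightarrow>
  in_arc t hh k = (n + 4 \<le> k)"
  unfolding in_arc_def by auto

lemma pos4:
  assumes d: "distinct ([a, b] @ u @ [c, d] @ v)"
  shows "pos ([a, b] @ u @ [c, d] @ v) a = 0" "pos ([a, b] @ u @ [c, d] @ v) b = 1"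
    "pos ([a, b] @ u @ [c, d] @ v) c = length u + 2" "pos ([a, b] @ u @ [c, d] @ v) d = length u + 3"
    "z \<in> set u \<Longrightarrow> pos ([a, b] @ u @ [c, d] @ v) z = 2 + pos u z"
    "z \<in> set v \<Longrightarrow> pos ([a, b] @ u @ [c, d] @ v) z = length u + 4 + pos v z"
proof -
  let ?w = "[a, b] @ u @ [c, d] @ v"
  show "pos ?w a = 0" by (rule pos_eq) (use d in auto)
  show "pos ?w b = 1" by (rule pos_eq) (use d in auto)
  show "pos ?w c = length u + 2" by (rule pos_eq) (use d in \<open>auto simp: nth_append\<close>)
  show "pos ?w d = length u + 3" by (rule pos_eq) (use d in \<open>auto simp: nth_append\<close>)
  show "z \<in> set u \<Longrightarrow> pos ?w z = 2 + pos u z"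
    by (rule pos_eq) (use d pos_prop[of u z] in \<open>auto simp: nth_append\<close>)
  show "z \<in> set v \<Longrightarrow> pos ?w z = length u + 4 + pos v z"
    by (rule pos_eq) (use d pos_prop[of v z] in \<open>auto simp: nth_append\<close>)
qed

lemma vstring_add_fresh:
  assumes v: "vstring p" and e: "e \<notin> fst ` set p"
  shows "vstring ([(e, b1)] @ p @ [(e, \<not> b1)])"
proof -
  have "\<And>b. (e, b) \<notin> set p" using fresh_notin[OF e] by blast
  then show ?thesis using v unfolding vstring_def by (cases b1) auto
qed

lemma kink_wrap_rev:
  assumes v: "vstring p" and e: "e \<notin> fst ` set p"
  shows "homotopic ([(e, True)] @ p @ [(e, False)]) p"
proof -
  have v1: "vstring ([(e, True)] @ (p @ [(e, False)]))" using vstring_add_fresh[OF v e, of True] by simp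
  have "homotopic ([(e, True)] @ (p @ [(e, False)])) ((p @ [(e, False)]) @ [(e, True)])"
    by (rule homotopic_rot_app[OF v1])
  moreover have "homotopic (p @ [(e, False), (e, True)] @ []) (p @ [])"
    by (rule kink_rev) (use v e in auto)
  ultimately show ?thesis using homotopic_trans by auto
qed

lemma kink_wrap_fwd:
  assumes v: "vstring p" and e: "e \<notin> fst ` set p"
  shows "homotopic ([(e, False)] @ p @ [(e, True)]) p"
proof -
  have v1: "vstring ([(e, False)] @ (p @ [(e, True)]))" using vstring_add_fresh[OF v e, of False] by simp
  have "homotopic ([(e, False)] @ (p @ [(e, True)])) ((p @ [(e, True)]) @ [(e, False)])"
    by (rule homotopic_rot_app[OF v1])
  moreover have "homotopic (p @ [(e, True), (e, False)] @ []) (p @ [])"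
    by (rule kink_fwd) (use v e in auto)
  ultimately show ?thesis using homotopic_trans by auto
qed

lemma in1_self: "\<not> in1 w e e" unfolding in1_def btw_def in_arc_def by auto
lemma in2_self: "\<not> in2 w e e" unfolding in2_def btw_def in_arc_def by auto


lemma nu_gen_move_b:
  assumes v: "vstring (u @ v)" and e1: "e1 \<notin> fst ` set (u @ v)" and e2: "e2 \<notin> fst ` set (u @ v)"
    and ne: "e1 \<noteq> e2"
    and xs: "xs \<in> {[(e1, True), (e2, False)], [(e2, False), (e1, True)]}"
    and ys: "ys \<in> {[(e1, False), (e2, True)], [(e2, True), (e1, False)]}"
  shows "(nu_gen (xs @ u @ ys @ v) :: ('r::comm_ring_1) tensor) = nu_gen (u @ v)"
proof -
  let ?w = "u @ v" and ?w' = "xs @ u @ ys @ v"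
  have hs: "hstep ?w ?w'" using hstep.move_b[OF v e1 e2 ne xs ys] .
  have v': "vstring ?w'" using hstep_vstring[OF hs] by blast
  have d': "distinct ?w'" using v' vstring_distinct by blast
  have d: "distinct ?w" using v vstring_distinct by blast
  have n1: "\<And>b. (e1, b) \<notin> set ?w" using fresh_notin[OF e1] by blast
  have n2: "\<And>b. (e2, b) \<notin> set ?w" using fresh_notin[OF e2] by blast
  have old: "\<And>h b. (h, b) \<in> set ?w \<Longrightarrow> h \<noteq> e1 \<and> h \<noteq> e2" using n1 n2 by blast
  obtain a b c dd where xsd: "xs = [a, b]" and ysd: "ys = [c, dd]"
    and abd: "(a = (e1, True) \<and> b = (e2, False)) \<or> (a = (e2, False) \<and> b = (e1, True))"
    and cdd: "(c = (e1, False) \<and> dd = (e2, True)) \<or> (c = (e2, True) \<and> dd = (e1, False))"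
    using xs ys by blast
  have filt: "?w = filter (\<lambda>(h, b). h \<noteq> e1 \<and> h \<noteq> e2) ?w'"
  proof -
    have "filter (\<lambda>(h, b). h \<noteq> e1 \<and> h \<noteq> e2) u = u" "filter (\<lambda>(h, b). h \<noteq> e1 \<and> h \<noteq> e2) v = v"
      using old by (auto intro!: filter_True)
    moreover have "filter (\<lambda>(h, b). h \<noteq> e1 \<and> h \<noteq> e2) xs = []" "filter (\<lambda>(h, b). h \<noteq> e1 \<and> h \<noteq> e2) ys = []"
      using xs ys by auto
    ultimately show ?thesis by simp
  qed
  have arr': "arr ?w' = insert e1 (insert e2 (arr ?w))" unfolding arr_def using xs ys by auto
  have enot: "e1 \<notin> arr ?w" "e2 \<notin> arr ?w" unfolding arr_def using n1 n2 by auto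
  have oldu: "\<And>h b. (h, b) \<in> set u \<Longrightarrow> \<not> (h = e1 \<or> h = e2)"
    and oldv: "\<And>h b. (h, b) \<in> set v \<Longrightarrow> \<not> (h = e1 \<or> h = e2)" using old by auto
  have Tg: "T ?w' g = (T ?w g :: 'r tensor)" if g: "g \<in> arr ?w" for g
  proof -
    have gs: "(g, True) \<in> set ?w" "(g, False) \<in> set ?w"
      using g vstring_partner'[OF v, of g True] unfolding arr_def by auto
    have adjx: "btw ?w' x y a = btw ?w' x y b" if "x \<in> set ?w" "y \<in> set ?w" for x y
      using btw_adj[of "[]" a b "u @ ys @ v" x y] d' that xsd by (simp, blast)
    have adjy: "btw ?w' x y c = btw ?w' x y dd" if "x \<in> set ?w" "y \<in> set ?w" for x y
    proof -
      have "btw ((xs @ u) @ [c, dd] @ v) x y c = btw ((xs @ u) @ [c, dd] @ v) x y dd"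
        by (rule btw_adj) (use d' that ysd in auto)
      then show ?thesis using ysd by simp
    qed
    have eq1: "in1 ?w' g e1 = in1 ?w' g e2"
      unfolding in1_def using adjx[OF gs] adjy[OF gs] abd cdd by auto
    have eq2: "in2 ?w' g e1 = in2 ?w' g e2"
      unfolding in2_def using adjx[OF gs(2) gs(1)] adjy[OF gs(2) gs(1)] abd cdd by auto
    note so = sub_old[OF v' filt g]
    let ?P1 = "\<lambda>(h, b). in1 ?w g h" and ?P2 = "\<lambda>(h, b). in2 ?w g h"
    have s1: "sub1 ?w' g = (if in1 ?w' g e1 then xs else []) @ filter ?P1 u @ (if in1 ?w' g e1 then ys else []) @ filter ?P1 v"
    proof -
      have "sub1 ?w' g = filter (\<lambda>(h, b). if h \<noteq> e1 \<and> h \<noteq> e2 then in1 ?w g h else in1 ?w' g h) xs @ filter ?P1 u @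
           filter (\<lambda>(h, b). if h \<noteq> e1 \<and> h \<noteq> e2 then in1 ?w g h else in1 ?w' g h) ys @ filter ?P1 v"
        by (simp only: so filter_append filter_old_part[OF oldu[unfolded de_Morgan_disj]]
             filter_old_part[OF oldv[unfolded de_Morgan_disj]])
      then show ?thesis using xs ys eq1 ne by auto
    qed
    have s2: "sub2 ?w' g = (if in2 ?w' g e1 then xs else []) @ filter ?P2 u @ (if in2 ?w' g e1 then ys else []) @ filter ?P2 v"
    proof -
      have "sub2 ?w' g = filter (\<lambda>(h, b). if h \<noteq> e1 \<and> h \<noteq> e2 then in2 ?w g h else in2 ?w' g h) xs @ filter ?P2 u @
           filter (\<lambda>(h, b). if h \<noteq> e1 \<and> h \<noteq> e2 then in2 ?w g h else in2 ?w' g h) ys @ filter ?P2 v"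
        by (simp only: so filter_append filter_old_part[OF oldu[unfolded de_Morgan_disj]]
             filter_old_part[OF oldv[unfolded de_Morgan_disj]])
      then show ?thesis using xs ys eq2 ne by auto
    qed
    have vs1: "vstring (filter ?P1 u @ filter ?P1 v)" using vstring_filter[OF v, of "in1 ?w g"] by simp
    have vs2: "vstring (filter ?P2 u @ filter ?P2 v)" using vstring_filter[OF v, of "in2 ?w g"] by simp
    have h1: "hstep (filter ?P1 u @ filter ?P1 v) (xs @ filter ?P1 u @ ys @ filter ?P1 v)"
      by (rule hstep.move_b[OF vs1 _ _ ne xs ys]) (use e1 e2 in auto)
    have h2: "hstep (filter ?P2 u @ filter ?P2 v) (xs @ filter ?P2 u @ ys @ filter ?P2 v)"
      by (rule hstep.move_b[OF vs2 _ _ ne xs ys]) (use e1 e2 in auto)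
    show ?thesis
    proof (rule T_hom)
      show "homotopic (sub1 ?w' g) (sub1 ?w g)"
        unfolding s1 unfolding sub1_eq filter_append using hstep_hom'[OF h1] homotopic_refl by simp
      show "homotopic (sub2 ?w' g) (sub2 ?w g)"
        unfolding s2 unfolding sub2_eq filter_append using hstep_hom'[OF h2] homotopic_refl by simp
    qed
  qed
  have "(\<lambda>ys. \<Sum>g\<in>arr ?w'. (T ?w' g ys :: 'r)) = (\<lambda>ys. T ?w' e1 ys + T ?w' e2 ys + (\<Sum>g\<in>arr ?w. T ?w g ys))"
    unfolding arr' using finite_arr enot Tg ne by (simp add: add.assoc)
  moreover have "(\<lambda>ys. T ?w' e1 ys + T ?w' e2 ys) = (\<lambda>_. 0::'r)"
proof -
    let ?n = "length u"
    have dw: "distinct ([a, b] @ u @ [c, dd] @ v)" using d' xsd ysd by simp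
    note p4 = pos4[OF dw]
    have w'eq: "?w' = [a, b] @ u @ [c, dd] @ v" using xsd ysd by simp
    have pe: "pos ?w' (e1, True) \<le> 1" "?n + 2 \<le> pos ?w' (e1, False)" "pos ?w' (e1, False) \<le> ?n + 3"
      "?n + 2 \<le> pos ?w' (e2, True)" "pos ?w' (e2, True) \<le> ?n + 3" "pos ?w' (e2, False) \<le> 1"
      unfolding w'eq using abd cdd p4 by auto
    have pz: "(z \<in> set u \<and> 2 \<le> pos ?w' z \<and> pos ?w' z < ?n + 2) \<or> (z \<in> set v \<and> ?n + 4 \<le> pos ?w' z)"
      if "z \<in> set ?w" for z
      using that p4(5)[of z] p4(6)[of z] pos_lt[of u z] d unfolding w'eq by auto
    have pzu: "(pos ?w' z < ?n + 2) = (z \<in> set u)" "(?n + 4 \<le> pos ?w' z) = (z \<in> set v)"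
      if "z \<in> set ?w" for z
      using pz[OF that] d by auto
    define inU where "inU h \<longleftrightarrow> (h, True) \<in> set u \<and> (h, False) \<in> set u" for h
    define inV where "inV h \<longleftrightarrow> (h, True) \<in> set v \<and> (h, False) \<in> set v" for h
    have oldin: "in1 ?w' e1 h = inU h \<and> in2 ?w' e1 h = inV h \<and> in1 ?w' e2 h = inV h \<and> in2 ?w' e2 h = inU h"
      if h: "(h, bb) \<in> set ?w" for h bb
    proof -
      have hs: "(h, True) \<in> set ?w" "(h, False) \<in> set ?w" using vstring_partner'[OF v h] by auto
      have r: "(2 \<le> pos ?w' (h, x) \<and> pos ?w' (h, x) < ?n + 2) \<or> ?n + 4 \<le> pos ?w' (h, x)" for x
        using pz[of "(h, x)"] hs by (cases x) auto
      show ?thesis unfolding in1_def in2_def btw_def inU_def inV_def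
        using arcU[OF pe(1) pe(2) pe(3) r] arcV[OF pe(1) pe(2) pe(3) r]
          arcV[OF pe(6) pe(4) pe(5) r] arcU[OF pe(6) pe(4) pe(5) r] pzu[OF hs(1)] pzu[OF hs(2)]
        by simp
    qed
    have inUn: "\<not> inU e1" "\<not> inU e2" "\<not> inV e1" "\<not> inV e2" unfolding inU_def inV_def using n1 n2 by auto
    have uv: "\<not> inU h" if "(h, bb) \<in> set v" for h bb
      using that d unfolding inU_def by (cases bb) auto
    have vu: "\<not> inV h" if "(h, bb) \<in> set u" for h bb
      using that d unfolding inV_def by (cases bb) auto
    define U' where "U' = filter (\<lambda>(h, bb). inU h) u"
    define V' where "V' = filter (\<lambda>(h, bb). inV h) v"
    have U'w: "U' = filter (\<lambda>(h, bb). inU h) ?w"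
    proof -
      have "filter (\<lambda>(h, bb). inU h) v = []" using uv by (auto simp: filter_empty_conv)
      then show ?thesis unfolding U'_def by simp
    qed
    have V'w: "V' = filter (\<lambda>(h, bb). inV h) ?w"
    proof -
      have "filter (\<lambda>(h, bb). inV h) u = []" using vu by (auto simp: filter_empty_conv)
      then show ?thesis unfolding V'_def by simp
    qed
    have vU: "vstring U'" unfolding U'w by (rule vstring_filter[OF v])
    have vV: "vstring V'" unfolding V'w by (rule vstring_filter[OF v])
    have fU: "e1 \<notin> fst ` set U'" "e2 \<notin> fst ` set U'" unfolding U'_def using e1 e2 by auto
    have fV: "e1 \<notin> fst ` set V'" "e2 \<notin> fst ` set V'" unfolding V'_def using e1 e2 by auto
    have gen: "filter (\<lambda>(h, bb). P h) ?w' = filter (\<lambda>(h, bb). (h = e1 \<and> P e1) \<or> (h = e2 \<and> P e2)) xs @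
        filter (\<lambda>(h, bb). Q h) u @ filter (\<lambda>(h, bb). (h = e1 \<and> P e1) \<or> (h = e2 \<and> P e2)) ys @ filter (\<lambda>(h, bb). R h) v"
      if "\<And>h bb. (h, bb) \<in> set u \<Longrightarrow> P h = Q h" "\<And>h bb. (h, bb) \<in> set v \<Longrightarrow> P h = R h" for P Q R
    proof -
      have "filter (\<lambda>(h, bb). P h) xs = filter (\<lambda>(h, bb). (h = e1 \<and> P e1) \<or> (h = e2 \<and> P e2)) xs"
        "filter (\<lambda>(h, bb). P h) ys = filter (\<lambda>(h, bb). (h = e1 \<and> P e1) \<or> (h = e2 \<and> P e2)) ys"
        using xs ys ne by auto
      moreover have "filter (\<lambda>(h, bb). P h) u = filter (\<lambda>(h, bb). Q h) u"
        by (rule filter_cong) (use that in auto)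
      moreover have "filter (\<lambda>(h, bb). P h) v = filter (\<lambda>(h, bb). R h) v"
        by (rule filter_cong) (use that in auto)
      ultimately show ?thesis by simp
    qed
    have s11: "sub1 ?w' e1 = filter (\<lambda>(h, bb). h = e2 \<and> in1 ?w' e1 e2) xs @ U' @ filter (\<lambda>(h, bb). h = e2 \<and> in1 ?w' e1 e2) ys"
      unfolding sub1_eq U'_def using gen[of "in1 ?w' e1" inU "\<lambda>_. False"] oldin uv in1_self by auto
    have s12: "sub2 ?w' e1 = filter (\<lambda>(h, bb). h = e2 \<and> in2 ?w' e1 e2) xs @ filter (\<lambda>(h, bb). h = e2 \<and> in2 ?w' e1 e2) ys @ V'"
      unfolding sub2_eq V'_def using gen[of "in2 ?w' e1" "\<lambda>_. False" inV] oldin vu in2_self by auto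
    have s21: "sub1 ?w' e2 = filter (\<lambda>(h, bb). h = e1 \<and> in1 ?w' e2 e1) xs @ filter (\<lambda>(h, bb). h = e1 \<and> in1 ?w' e2 e1) ys @ V'"
      unfolding sub1_eq V'_def using gen[of "in1 ?w' e2" "\<lambda>_. False" inV] oldin vu in1_self by auto
    have s22: "sub2 ?w' e2 = filter (\<lambda>(h, bb). h = e1 \<and> in2 ?w' e2 e1) xs @ U' @ filter (\<lambda>(h, bb). h = e1 \<and> in2 ?w' e2 e1) ys"
      unfolding sub2_eq U'_def using gen[of "in2 ?w' e2" inU "\<lambda>_. False"] oldin uv in2_self by auto
    have pnum: "pos ?w' a = 0" "pos ?w' b = 1" "pos ?w' c = ?n + 2" "pos ?w' dd = ?n + 3"
      unfolding w'eq using p4 by auto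
    consider (A) "xs = [(e1, True), (e2, False)]" "ys = [(e1, False), (e2, True)]"
      | (B) "xs = [(e2, False), (e1, True)]" "ys = [(e1, False), (e2, True)]"
      | (C) "xs = [(e1, True), (e2, False)]" "ys = [(e2, True), (e1, False)]"
      | (D) "xs = [(e2, False), (e1, True)]" "ys = [(e2, True), (e1, False)]"
      using xs ys by blast
    then show ?thesis
    proof cases
      case A
      then have pp: "pos ?w' (e1, True) = 0" "pos ?w' (e2, False) = 1" "pos ?w' (e1, False) = ?n + 2" "pos ?w' (e2, True) = ?n + 3"
        using pnum xsd ysd by auto
      have c: "\<not> in1 ?w' e1 e2" "\<not> in2 ?w' e1 e2" "\<not> in1 ?w' e2 e1" "\<not> in2 ?w' e2 e1"
        unfolding in1_def in2_def btw_def pp in_arc_def by auto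
      show ?thesis apply (rule T_swap)
        unfolding s11 s12 s21 s22 using A c ne homotopic_refl by auto
    next
      case B
      then have pp: "pos ?w' (e2, False) = 0" "pos ?w' (e1, True) = 1" "pos ?w' (e1, False) = ?n + 2" "pos ?w' (e2, True) = ?n + 3"
        using pnum xsd ysd by auto
      have c: "\<not> in1 ?w' e1 e2" "in2 ?w' e1 e2" "\<not> in1 ?w' e2 e1" "in2 ?w' e2 e1"
        unfolding in1_def in2_def btw_def pp in_arc_def by auto
      have h1: "homotopic U' ([(e1, True)] @ U' @ [(e1, False)])"
        using kink_wrap_rev[OF vU fU(1)] homotopic_sym by blast
      have h2: "homotopic ([(e2, False), (e2, True)] @ V') V'"
        using kink_rev[of "[]" V' e2] vV fV by simp
      show ?thesis apply (rule T_swap)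
        unfolding s11 s12 s21 s22 using B c ne h1 h2 by auto
    next
      case C
      then have pp: "pos ?w' (e1, True) = 0" "pos ?w' (e2, False) = 1" "pos ?w' (e2, True) = ?n + 2" "pos ?w' (e1, False) = ?n + 3"
        using pnum xsd ysd by auto
      have c: "in1 ?w' e1 e2" "\<not> in2 ?w' e1 e2" "in1 ?w' e2 e1" "\<not> in2 ?w' e2 e1"
        unfolding in1_def in2_def btw_def pp in_arc_def by auto
      have h1: "homotopic ([(e2, False)] @ U' @ [(e2, True)]) U'"
        using kink_wrap_fwd[OF vU fU(2)] by blast
      have h2: "homotopic V' ([(e1, True), (e1, False)] @ V')"
        using kink_fwd[of "[]" V' e1] vV fV homotopic_sym by fastforce
      show ?thesis apply (rule T_swap)
        unfolding s11 s12 s21 s22 using C c ne h1 h2 homotopic_refl by auto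
    next
      case D
      then have pp: "pos ?w' (e2, False) = 0" "pos ?w' (e1, True) = 1" "pos ?w' (e2, True) = ?n + 2" "pos ?w' (e1, False) = ?n + 3"
        using pnum xsd ysd by auto
      have c: "\<not> in1 ?w' e1 e2" "\<not> in2 ?w' e1 e2" "\<not> in1 ?w' e2 e1" "\<not> in2 ?w' e2 e1"
        unfolding in1_def in2_def btw_def pp in_arc_def by auto
      show ?thesis apply (rule T_swap)
        unfolding s11 s12 s21 s22 using D c ne homotopic_refl by auto
    qed
  qed
  ultimately show ?thesis unfolding nu_gen_T by (metis (no_types, lifting) add_0)
qed


lemma pos6:
  assumes d: "distinct ([a0, a1] @ u @ [b0, b1] @ v @ [c0, c1] @ x)"
  defines "W \<equiv> [a0, a1] @ u @ [b0, b1] @ v @ [c0, c1] @ x"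
  shows "pos W a0 = 0" "pos W a1 = 1"
    "pos W b0 = length u + 2" "pos W b1 = length u + 3"
    "pos W c0 = length u + length v + 4" "pos W c1 = length u + length v + 5"
    "z \<in> set u \<Longrightarrow> pos W z = 2 + pos u z"
    "z \<in> set v \<Longrightarrow> pos W z = length u + 4 + pos v z"
    "z \<in> set x \<Longrightarrow> pos W z = length u + length v + 6 + pos x z"
  unfolding W_def
  by (rule pos_eq; use d pos_prop[of u z] pos_prop[of v z] pos_prop[of x z] in \<open>auto simp: nth_append\<close>)+

definition segpos :: "nat \<Rightarrow> nat \<Rightarrow> nat \<Rightarrow> bool" where
  "segpos n m k \<longleftrightarrow> (2 \<le> k \<and> k < n + 2) \<or> (n + 4 \<le> k \<and> k < n + m + 4) \<or> n + m + 6 \<le> k"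

definition slotpos :: "nat \<Rightarrow> nat \<Rightarrow> nat \<Rightarrow> bool" where
  "slotpos n m k \<longleftrightarrow> k \<le> 1 \<or> k = n + 2 \<or> k = n + 3 \<or> k = n + m + 4 \<or> k = n + m + 5"

lemma pos6_seg:
  assumes d: "distinct ([a0, a1] @ u @ [b0, b1] @ v @ [c0, c1] @ x)"
    and z: "z \<in> set (u @ v @ x)"
  shows "segpos (length u) (length v) (pos ([a0, a1] @ u @ [b0, b1] @ v @ [c0, c1] @ x) z)"
    "(pos ([a0, a1] @ u @ [b0, b1] @ v @ [c0, c1] @ x) z < length u + 2) = (z \<in> set u)"
    "(length u + 4 \<le> pos ([a0, a1] @ u @ [b0, b1] @ v @ [c0, c1] @ x) z \<and>
      pos ([a0, a1] @ u @ [b0, b1] @ v @ [c0, c1] @ x) z < length u + length v + 4) = (z \<in> set v)"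
    "(length u + length v + 6 \<le> pos ([a0, a1] @ u @ [b0, b1] @ v @ [c0, c1] @ x) z) = (z \<in> set x)"
proof -
  have du: "distinct u" "distinct v" "distinct x" "set u \<inter> set v = {}" "set u \<inter> set x = {}" "set v \<inter> set x = {}"
    using d by auto
  note p = pos6[OF d]
  have "z \<in> set u \<or> z \<in> set v \<or> z \<in> set x" using z by auto
  then show "segpos (length u) (length v) (pos ([a0, a1] @ u @ [b0, b1] @ v @ [c0, c1] @ x) z)"
    "(pos ([a0, a1] @ u @ [b0, b1] @ v @ [c0, c1] @ x) z < length u + 2) = (z \<in> set u)"
    "(length u + 4 \<le> pos ([a0, a1] @ u @ [b0, b1] @ v @ [c0, c1] @ x) z \<and>
      pos ([a0, a1] @ u @ [b0, b1] @ v @ [c0, c1] @ x) z < length u + length v + 4) = (z \<in> set v)"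
    "(length u + length v + 6 \<le> pos ([a0, a1] @ u @ [b0, b1] @ v @ [c0, c1] @ x) z) = (z \<in> set x)"
    using p(7)[of z] p(8)[of z] p(9)[of z] pos_lt[OF du(1), of z] pos_lt[OF du(2), of z] du(4-6)
    unfolding segpos_def by auto
qed

lemma in_arc_adj: "P \<noteq> s \<Longrightarrow> P \<noteq> Suc s \<Longrightarrow> Q \<noteq> s \<Longrightarrow> Q \<noteq> Suc s \<Longrightarrow>
  in_arc P Q (Suc s) = in_arc P Q s"
  unfolding in_arc_def by auto


definition pin :: "vword \<Rightarrow> nat \<Rightarrow> bool" where
  "pin L h \<longleftrightarrow> (h, True) \<in> set L \<and> (h, False) \<in> set L"

definition pout :: "vword \<Rightarrow> vword \<Rightarrow> nat \<Rightarrow> bool" where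
  "pout L Lo h \<longleftrightarrow> pin Lo h \<and> (h, True) \<notin> set L \<and> (h, False) \<notin> set L"

lemma arc12: "t \<le> 1 \<Longrightarrow> n + 2 \<le> hh \<Longrightarrow> hh \<le> n + 3 \<Longrightarrow> segpos n m k \<Longrightarrow> in_arc t hh k = (k < n + 2)"
  unfolding in_arc_def segpos_def by auto
lemma arc21: "t \<le> 1 \<Longrightarrow> n + 2 \<le> hh \<Longrightarrow> hh \<le> n + 3 \<Longrightarrow> segpos n m k \<Longrightarrow> in_arc hh t k = (\<not> k < n + 2)"
  unfolding in_arc_def segpos_def by auto
lemma arc23: "n + 2 \<le> t \<Longrightarrow> t \<le> n + 3 \<Longrightarrow> n + m + 4 \<le> hh \<Longrightarrow> hh \<le> n + m + 5 \<Longrightarrow> segpos n m k \<Longrightarrow>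
  in_arc t hh k = (n + 4 \<le> k \<and> k < n + m + 4)"
  unfolding in_arc_def segpos_def by auto
lemma arc32: "n + 2 \<le> t \<Longrightarrow> t \<le> n + 3 \<Longrightarrow> n + m + 4 \<le> hh \<Longrightarrow> hh \<le> n + m + 5 \<Longrightarrow> segpos n m k \<Longrightarrow>
  in_arc hh t k = (\<not> (n + 4 \<le> k \<and> k < n + m + 4))"
  unfolding in_arc_def segpos_def by auto
lemma arc31: "t \<le> 1 \<Longrightarrow> n + m + 4 \<le> hh \<Longrightarrow> hh \<le> n + m + 5 \<Longrightarrow> segpos n m k \<Longrightarrow>
  in_arc hh t k = (n + m + 6 \<le> k)"
  unfolding in_arc_def segpos_def by auto
lemma arc13: "t \<le> 1 \<Longrightarrow> n + m + 4 \<le> hh \<Longrightarrow> hh \<le> n + m + 5 \<Longrightarrow> segpos n m k \<Longrightarrow>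
  in_arc t hh k = (\<not> n + m + 6 \<le> k)"
  unfolding in_arc_def segpos_def by auto

locale six =
  fixes a0 a1 b0 b1 c0 c1 :: "nat \<times> bool" and u v x :: vword
  assumes d: "distinct ([a0, a1] @ u @ [b0, b1] @ v @ [c0, c1] @ x)"
begin

abbreviation "W \<equiv> [a0, a1] @ u @ [b0, b1] @ v @ [c0, c1] @ x"
abbreviation "Lo \<equiv> u @ v @ x"
abbreviation "n \<equiv> length u"
abbreviation "m \<equiv> length v"

lemma regions:
  assumes h: "pin Lo h"
  shows "segpos n m (pos W (h, True))" "segpos n m (pos W (h, False))"
    "(pos W (h, True) < n + 2 \<and> pos W (h, False) < n + 2) = pin u h"
    "(\<not> pos W (h, True) < n + 2 \<and> \<not> pos W (h, False) < n + 2) = pout u Lo h"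
    "((n + 4 \<le> pos W (h, True) \<and> pos W (h, True) < n + m + 4) \<and> (n + 4 \<le> pos W (h, False) \<and> pos W (h, False) < n + m + 4)) = pin v h"
    "(\<not> (n + 4 \<le> pos W (h, True) \<and> pos W (h, True) < n + m + 4) \<and> \<not> (n + 4 \<le> pos W (h, False) \<and> pos W (h, False) < n + m + 4)) = pout v Lo h"
    "(n + m + 6 \<le> pos W (h, True) \<and> n + m + 6 \<le> pos W (h, False)) = pin x h"
    "(\<not> n + m + 6 \<le> pos W (h, True) \<and> \<not> n + m + 6 \<le> pos W (h, False)) = pout x Lo h"
  using pos6_seg[OF d, of "(h, True)"] pos6_seg[OF d, of "(h, False)"] h unfolding pin_def pout_def
  by auto

lemma in_region:
  assumes h: "pin Lo h"
    and t: "pos W (E, True) = t" and hh: "pos W (E, False) = hh"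
  shows "t \<le> 1 \<Longrightarrow> n + 2 \<le> hh \<Longrightarrow> hh \<le> n + 3 \<Longrightarrow> in1 W E h = pin u h \<and> in2 W E h = pout u Lo h"
    "hh \<le> 1 \<Longrightarrow> n + 2 \<le> t \<Longrightarrow> t \<le> n + 3 \<Longrightarrow> in2 W E h = pin u h \<and> in1 W E h = pout u Lo h"
    "n + 2 \<le> t \<Longrightarrow> t \<le> n + 3 \<Longrightarrow> n + m + 4 \<le> hh \<Longrightarrow> hh \<le> n + m + 5 \<Longrightarrow> in1 W E h = pin v h \<and> in2 W E h = pout v Lo h"
    "n + 2 \<le> hh \<Longrightarrow> hh \<le> n + 3 \<Longrightarrow> n + m + 4 \<le> t \<Longrightarrow> t \<le> n + m + 5 \<Longrightarrow> in2 W E h = pin v h \<and> in1 W E h = pout v Lo h"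
    "hh \<le> 1 \<Longrightarrow> n + m + 4 \<le> t \<Longrightarrow> t \<le> n + m + 5 \<Longrightarrow> in1 W E h = pin x h \<and> in2 W E h = pout x Lo h"
    "t \<le> 1 \<Longrightarrow> n + m + 4 \<le> hh \<Longrightarrow> hh \<le> n + m + 5 \<Longrightarrow> in2 W E h = pin x h \<and> in1 W E h = pout x Lo h"
proof -
  note r = regions[OF h]
  show "t \<le> 1 \<Longrightarrow> n + 2 \<le> hh \<Longrightarrow> hh \<le> n + 3 \<Longrightarrow> in1 W E h = pin u h \<and> in2 W E h = pout u Lo h"
    unfolding in1_def in2_def btw_def t hh using r arc12[OF _ _ _ r(1)] arc12[OF _ _ _ r(2)]
      arc21[OF _ _ _ r(1)] arc21[OF _ _ _ r(2)] by simp
  show "hh \<le> 1 \<Longrightarrow> n + 2 \<le> t \<Longrightarrow> t \<le> n + 3 \<Longrightarrow> in2 W E h = pin u h \<and> in1 W E h = pout u Lo h"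
    unfolding in1_def in2_def btw_def t hh using r arc12[OF _ _ _ r(1)] arc12[OF _ _ _ r(2)]
      arc21[OF _ _ _ r(1)] arc21[OF _ _ _ r(2)] by simp
  show "n + 2 \<le> t \<Longrightarrow> t \<le> n + 3 \<Longrightarrow> n + m + 4 \<le> hh \<Longrightarrow> hh \<le> n + m + 5 \<Longrightarrow> in1 W E h = pin v h \<and> in2 W E h = pout v Lo h"
    unfolding in1_def in2_def btw_def t hh using r arc23[OF _ _ _ _ r(1)] arc23[OF _ _ _ _ r(2)]
      arc32[OF _ _ _ _ r(1)] arc32[OF _ _ _ _ r(2)] by simp
  show "n + 2 \<le> hh \<Longrightarrow> hh \<le> n + 3 \<Longrightarrow> n + m + 4 \<le> t \<Longrightarrow> t \<le> n + m + 5 \<Longrightarrow> in2 W E h = pin v h \<and> in1 W E h = pout v Lo h"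
    unfolding in1_def in2_def btw_def t hh using r arc23[OF _ _ _ _ r(1)] arc23[OF _ _ _ _ r(2)]
      arc32[OF _ _ _ _ r(1)] arc32[OF _ _ _ _ r(2)] by simp
  show "hh \<le> 1 \<Longrightarrow> n + m + 4 \<le> t \<Longrightarrow> t \<le> n + m + 5 \<Longrightarrow> in1 W E h = pin x h \<and> in2 W E h = pout x Lo h"
    unfolding in1_def in2_def btw_def t hh using r arc31[OF _ _ _ r(1)] arc31[OF _ _ _ r(2)]
      arc13[OF _ _ _ r(1)] arc13[OF _ _ _ r(2)] by simp
  show "t \<le> 1 \<Longrightarrow> n + m + 4 \<le> hh \<Longrightarrow> hh \<le> n + m + 5 \<Longrightarrow> in2 W E h = pin x h \<and> in1 W E h = pout x Lo h"
    unfolding in1_def in2_def btw_def t hh using r arc31[OF _ _ _ r(1)] arc31[OF _ _ _ r(2)]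
      arc13[OF _ _ _ r(1)] arc13[OF _ _ _ r(2)] by simp
qed

end


context six begin

abbreviation "W' \<equiv> [a1, a0] @ u @ [b1, b0] @ v @ [c1, c0] @ x"

lemma dW': "distinct W'" using d by auto

lemma posW'_old: assumes z: "z \<in> set Lo" shows "pos W' z = pos W z"
proof -
  have "z \<in> set u \<or> z \<in> set v \<or> z \<in> set x" using z by auto
  then show ?thesis
  proof (elim disjE)
    assume "z \<in> set u" then show ?thesis using pos6(7)[OF dW', of z] pos6(7)[OF d, of z] by simp
  next
    assume "z \<in> set v" then show ?thesis using pos6(8)[OF dW', of z] pos6(8)[OF d, of z] by simp
  next
    assume "z \<in> set x" then show ?thesis using pos6(9)[OF dW', of z] pos6(9)[OF d, of z] by simp
  qed
qed

lemma posW': "pos W' a1 = 0" "pos W' a0 = 1" "pos W' b1 = n + 2" "pos W' b0 = n + 3"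
    "pos W' c1 = n + m + 4" "pos W' c0 = n + m + 5"
    "z \<in> set Lo \<Longrightarrow> pos W' z = pos W z"
  using pos6[OF dW'] posW'_old by auto

lemma posW: "pos W a0 = 0" "pos W a1 = 1" "pos W b0 = n + 2" "pos W b1 = n + 3"
    "pos W c0 = n + m + 4" "pos W c1 = n + m + 5"
  using pos6[OF d] by auto

lemma slot_K:
  assumes P: "segpos n m P" and Q: "segpos n m Q"
  shows "in_arc P Q (pos W a1) = in_arc P Q 0" "in_arc P Q (pos W a0) = in_arc P Q 0"
        "in_arc P Q (pos W' a1) = in_arc P Q 0" "in_arc P Q (pos W' a0) = in_arc P Q 0"
        "in_arc P Q (pos W b1) = in_arc P Q (n + 2)" "in_arc P Q (pos W b0) = in_arc P Q (n + 2)"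
        "in_arc P Q (pos W' b1) = in_arc P Q (n + 2)" "in_arc P Q (pos W' b0) = in_arc P Q (n + 2)"
        "in_arc P Q (pos W c1) = in_arc P Q (n + m + 4)" "in_arc P Q (pos W c0) = in_arc P Q (n + m + 4)"
        "in_arc P Q (pos W' c1) = in_arc P Q (n + m + 4)" "in_arc P Q (pos W' c0) = in_arc P Q (n + m + 4)"
proof -
  have nP: "P \<noteq> 0" "P \<noteq> Suc 0" "P \<noteq> n + 2" "P \<noteq> Suc (n + 2)" "P \<noteq> n + m + 4" "P \<noteq> Suc (n + m + 4)"
    using P unfolding segpos_def by auto
  have nQ: "Q \<noteq> 0" "Q \<noteq> Suc 0" "Q \<noteq> n + 2" "Q \<noteq> Suc (n + 2)" "Q \<noteq> n + m + 4" "Q \<noteq> Suc (n + m + 4)"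
    using Q unfolding segpos_def by auto
  have k1: "in_arc P Q 1 = in_arc P Q 0" using in_arc_adj[of P 0 Q] nP nQ by simp
  have k2: "in_arc P Q (n + 3) = in_arc P Q (n + 2)" using in_arc_adj[of P "n + 2" Q] nP nQ
    by (simp add: numeral_3_eq_3 numeral_2_eq_2)
  have k3: "in_arc P Q (n + m + 5) = in_arc P Q (n + m + 4)" using in_arc_adj[of P "n + m + 4" Q] nP nQ
    by (simp add: eval_nat_numeral)
  show "in_arc P Q (pos W a1) = in_arc P Q 0" "in_arc P Q (pos W a0) = in_arc P Q 0"
        "in_arc P Q (pos W' a1) = in_arc P Q 0" "in_arc P Q (pos W' a0) = in_arc P Q 0"
        "in_arc P Q (pos W b1) = in_arc P Q (n + 2)" "in_arc P Q (pos W b0) = in_arc P Q (n + 2)"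
        "in_arc P Q (pos W' b1) = in_arc P Q (n + 2)" "in_arc P Q (pos W' b0) = in_arc P Q (n + 2)"
        "in_arc P Q (pos W c1) = in_arc P Q (n + m + 4)" "in_arc P Q (pos W c0) = in_arc P Q (n + m + 4)"
        "in_arc P Q (pos W' c1) = in_arc P Q (n + m + 4)" "in_arc P Q (pos W' c0) = in_arc P Q (n + m + 4)"
    using k1 k2 k3 posW posW' by simp_all
qed

lemma old_in_eq:
  assumes g: "pin Lo g" and z: "z \<in> set W"
  shows "in_arc (pos W (g, True)) (pos W (g, False)) (pos W' z) = in_arc (pos W (g, True)) (pos W (g, False)) (pos W z)"
        "in_arc (pos W (g, False)) (pos W (g, True)) (pos W' z) = in_arc (pos W (g, False)) (pos W (g, True)) (pos W z)"
proof -
  note r = regions[OF g]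
  have "z = a0 \<or> z = a1 \<or> z = b0 \<or> z = b1 \<or> z = c0 \<or> z = c1 \<or> z \<in> set Lo" using z by auto
  then show "in_arc (pos W (g, True)) (pos W (g, False)) (pos W' z) = in_arc (pos W (g, True)) (pos W (g, False)) (pos W z)"
        "in_arc (pos W (g, False)) (pos W (g, True)) (pos W' z) = in_arc (pos W (g, False)) (pos W (g, True)) (pos W z)"
    by (elim disjE; simp only: slot_K[OF r(1) r(2)] slot_K[OF r(2) r(1)] posW'(7))+
qed

lemma old_in1:
  assumes g: "pin Lo g" and hz: "(h, True) \<in> set W" "(h, False) \<in> set W"
  shows "in1 W' g h = in1 W g h" "in2 W' g h = in2 W g h"
proof -
  have gW: "pos W' (g, True) = pos W (g, True)" "pos W' (g, False) = pos W (g, False)"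
    using g posW'(7) unfolding pin_def by auto
  show "in1 W' g h = in1 W g h" "in2 W' g h = in2 W g h"
    unfolding in1_def in2_def btw_def gW using old_in_eq[OF g hz(1)] old_in_eq[OF g hz(2)] by auto
qed

lemma old_filter_hom:
  assumes vW: "vstring W"
    and all: "(F a0 \<and> F a1) \<or> (F b0 \<and> F b1) \<or> (F c0 \<and> F c1) \<Longrightarrow> F a0 \<and> F a1 \<and> F b0 \<and> F b1 \<and> F c0 \<and> F c1"
    and mv: "\<And>u' v' x'. vstring ([a0, a1] @ u' @ [b0, b1] @ v' @ [c0, c1] @ x') \<Longrightarrow>
       homotopic ([a0, a1] @ u' @ [b0, b1] @ v' @ [c0, c1] @ x') ([a1, a0] @ u' @ [b1, b0] @ v' @ [c1, c0] @ x')"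
    and Fp: "F = (\<lambda>(h, b). G h)"
  shows "homotopic (filter F W) (filter F W')"
proof (cases "(F a0 \<and> F a1) \<or> (F b0 \<and> F b1) \<or> (F c0 \<and> F c1)")
  case True
  then have A: "F a0" "F a1" "F b0" "F b1" "F c0" "F c1" using all by auto
  have vf: "vstring (filter F W)" using vstring_filter[OF vW, of G] Fp by simp
  show ?thesis using mv[of "filter F u" "filter F v" "filter F x"] vf A by simp
next
  case False
  then have "filter F W' = filter F W" by auto
  then show ?thesis by (simp add: homotopic_refl)
qed

end


lemma seg_filter:
  assumes "\<And>h b. (h, b) \<in> set L \<Longrightarrow> h \<notin> S"
  shows "filter (\<lambda>(h, b). R h \<or> h \<in> S) L = filter (\<lambda>(h, b). R h) L"
  by (rule filter_cong) (use assms in auto)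

lemma filter_cong2:
  assumes "\<And>h b. (h, b) \<in> set L \<Longrightarrow> P h = Q h"
  shows "filter (\<lambda>(h, b). P h) L = filter (\<lambda>(h, b). Q h) L"
  by (rule filter_cong) (use assms in auto)

lemma pout_self: "filter (\<lambda>(h, b). pout L Lo h) L = []"
  unfolding pout_def filter_empty_conv
proof (clarify)
  fix a b assume "(a, b) \<in> set L" "(a, True) \<notin> set L" "(a, False) \<notin> set L"
  then show False by (cases b) auto
qed
lemma hom_move_b1:
  assumes v: "vstring (p @ q)" and E1: "E1 \<notin> fst ` set (p @ q)" and E2: "E2 \<notin> fst ` set (p @ q)" and ne: "E1 \<noteq> E2"
  shows "homotopic ([(E2, False), (E1, True)] @ p @ [(E1, False), (E2, True)] @ q) (p @ q)"
proof -
  have "hstep (p @ q) ([(E2, False), (E1, True)] @ p @ [(E1, False), (E2, True)] @ q)"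
    by (rule hstep.move_b[OF v E1 E2 ne]) auto
  then show ?thesis by (rule hstep_hom')
qed
lemma pout_self_app: "filter (\<lambda>(h, b). pout L Lo h) (L @ L') = filter (\<lambda>(h, b). pout L Lo h) L'"
  using pout_self[of L Lo] by (simp only: filter_append append_Nil)

lemma hom_move_b2:
  assumes v: "vstring (p @ q)" and E1: "E1 \<notin> fst ` set (p @ q)" and E2: "E2 \<notin> fst ` set (p @ q)" and ne: "E1 \<noteq> E2"
  shows "homotopic ([(E1, True)] @ p @ [(E1, False), (E2, True)] @ q @ [(E2, False)]) (p @ q)"
proof -
  have h: "homotopic ([(E2, False), (E1, True)] @ p @ [(E1, False), (E2, True)] @ q) (p @ q)"
    by (rule hom_move_b1[OF v E1 E2 ne])
  have eq: "[(E2, False)] @ ([(E1, True)] @ p @ [(E1, False), (E2, True)] @ q) = [(E2, False), (E1, True)] @ p @ [(E1, False), (E2, True)] @ q"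
    by simp
  have v2: "vstring ([(E2, False)] @ ([(E1, True)] @ p @ [(E1, False), (E2, True)] @ q))"
    unfolding eq by (rule homotopic_vstring[OF homotopic_sym[OF h] v])
  have "homotopic ([(E2, False)] @ ([(E1, True)] @ p @ [(E1, False), (E2, True)] @ q))
     (([(E1, True)] @ p @ [(E1, False), (E2, True)] @ q) @ [(E2, False)])"
    by (rule homotopic_rot_app[OF v2])
  then have "homotopic (([(E1, True)] @ p @ [(E1, False), (E2, True)] @ q) @ [(E2, False)]) (p @ q)"
    unfolding eq using h homotopic_sym homotopic_trans by blast
  then show ?thesis by simp
qed
lemma hom_move_b4:
  assumes v: "vstring (p @ q)" and A: "A \<notin> fst ` set (p @ q)" and B: "B \<notin> fst ` set (p @ q)" and ne: "A \<noteq> B"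
  shows "homotopic ([(A, True), (B, False)] @ p @ [(B, True), (A, False)] @ q) (p @ q)"
proof -
  have "hstep (p @ q) ([(A, True), (B, False)] @ p @ [(B, True), (A, False)] @ q)"
    by (rule hstep.move_b[OF v A B ne]) auto
  then show ?thesis by (rule hstep_hom')
qed

lemma hom_move_b3:
  assumes v: "vstring (p @ q)" and E1: "E1 \<notin> fst ` set (p @ q)" and E2: "E2 \<notin> fst ` set (p @ q)" and ne: "E1 \<noteq> E2"
  shows "homotopic ([(E1, False)] @ p @ [(E1, True), (E2, False)] @ q @ [(E2, True)]) (p @ q)"
proof -
  have ne': "E2 \<noteq> E1" using ne by simp
  have h: "homotopic ([(E2, True), (E1, False)] @ p @ [(E1, True), (E2, False)] @ q) (p @ q)"
    by (rule hom_move_b4[OF v E2 E1 ne'])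
  have eq: "[(E2, True)] @ ([(E1, False)] @ p @ [(E1, True), (E2, False)] @ q) = [(E2, True), (E1, False)] @ p @ [(E1, True), (E2, False)] @ q"
    by simp
  have v2: "vstring ([(E2, True)] @ ([(E1, False)] @ p @ [(E1, True), (E2, False)] @ q))"
    unfolding eq by (rule homotopic_vstring[OF homotopic_sym[OF h] v])
  have "homotopic ([(E2, True)] @ ([(E1, False)] @ p @ [(E1, True), (E2, False)] @ q))
     (([(E1, False)] @ p @ [(E1, True), (E2, False)] @ q) @ [(E2, True)])"
    by (rule homotopic_rot_app[OF v2])
  then have "homotopic (([(E1, False)] @ p @ [(E1, True), (E2, False)] @ q) @ [(E2, True)]) (p @ q)"
    unfolding eq using h homotopic_sym homotopic_trans by blast
  then show ?thesis by simp
qed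


lemma sub_char:
  assumes o1: "\<And>h b. (h, b) \<in> set X \<Longrightarrow> h \<notin> Sp \<Longrightarrow> in1 X E h = R h"
    and s1: "\<And>h. h \<in> Sp \<Longrightarrow> in1 X E h = (h \<in> S)" and nr: "\<And>h. h \<in> Sp \<Longrightarrow> \<not> R h"
    and sS: "S \<subseteq> Sp"
  shows "sub1 X E = filter (\<lambda>(h, b). R h \<or> h \<in> S) X"
  unfolding sub1_eq
proof (rule filter_cong)
  fix z assume z: "z \<in> set X"
  obtain h b where zh: "z = (h, b)" by (cases z)
  show "(case z of (h, b) \<Rightarrow> in1 X E h) = (case z of (h, b) \<Rightarrow> R h \<or> h \<in> S)"
    using o1[of h b] s1[of h] nr[of h] z zh sS by (cases "h \<in> Sp") auto
qed simp

lemma sub_char2: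
  assumes o1: "\<And>h b. (h, b) \<in> set X \<Longrightarrow> h \<notin> Sp \<Longrightarrow> in2 X E h = R h"
    and s1: "\<And>h. h \<in> Sp \<Longrightarrow> in2 X E h = (h \<in> S)" and nr: "\<And>h. h \<in> Sp \<Longrightarrow> \<not> R h"
    and sS: "S \<subseteq> Sp"
  shows "sub2 X E = filter (\<lambda>(h, b). R h \<or> h \<in> S) X"
  unfolding sub2_eq
proof (rule filter_cong)
  fix z assume z: "z \<in> set X"
  obtain h b where zh: "z = (h, b)" by (cases z)
  show "(case z of (h, b) \<Rightarrow> in2 X E h) = (case z of (h, b) \<Rightarrow> R h \<or> h \<in> S)"
    using o1[of h b] s1[of h] nr[of h] z zh sS by (cases "h \<in> Sp") auto
qed simp

lemma nu_gen_move_c1: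
  fixes e1 e2 e3 :: nat and u v x :: vword
  defines "W \<equiv> [(e3, False), (e1, True)] @ u @ [(e1, False), (e2, True)] @ v @ [(e2, False), (e3, True)] @ x"
    and "W' \<equiv> [(e1, True), (e3, False)] @ u @ [(e2, True), (e1, False)] @ v @ [(e3, True), (e2, False)] @ x"
  assumes vW: "vstring W"
  shows "(nu_gen W' :: ('r::comm_ring_1) tensor) = nu_gen W"
proof -
  have dW: "distinct W" using vW vstring_distinct by blast
  interpret A: six "(e3, False)" "(e1, True)" "(e1, False)" "(e2, True)" "(e2, False)" "(e3, True)" u v x
    by unfold_locales (use dW in \<open>simp add: W_def\<close>)
  have dW': "distinct W'" using A.dW' unfolding W'_def by simp
  interpret B: six "(e1, True)" "(e3, False)" "(e2, True)" "(e1, False)" "(e3, True)" "(e2, False)" u v x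
    by unfold_locales (use dW' in \<open>simp add: W'_def\<close>)
  have hs: "hstep W W'" unfolding W_def W'_def using hstep.move_c1 vW[unfolded W_def] by simp
  have vW': "vstring W'" using hstep_vstring[OF hs] by blast
  have ne: "e1 \<noteq> e2" "e2 \<noteq> e3" "e1 \<noteq> e3" using dW unfolding W_def by auto
  let ?Lo = "u @ v @ x"
  have old: "h \<noteq> e1 \<and> h \<noteq> e2 \<and> h \<noteq> e3" if "(h, b) \<in> set ?Lo" for h b
    using dW that unfolding W_def by (cases b) auto
  have setW: "set W' = set W" unfolding W_def W'_def by auto
  have arrW: "arr W' = arr W" unfolding arr_def setW ..
  have n: "A.n = length u" "A.m = length v" by simp_all
  have pW: "pos W (e3, False) = 0" "pos W (e1, True) = 1" "pos W (e1, False) = length u + 2"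
    "pos W (e2, True) = length u + 3" "pos W (e2, False) = length u + length v + 4" "pos W (e3, True) = length u + length v + 5"
    using A.posW unfolding W_def by simp_all
  have pW': "pos W' (e1, True) = 0" "pos W' (e3, False) = 1" "pos W' (e2, True) = length u + 2"
    "pos W' (e1, False) = length u + 3" "pos W' (e3, True) = length u + length v + 4" "pos W' (e2, False) = length u + length v + 5"
    using B.posW unfolding W'_def by simp_all
  have T: "T W' g = (T W g :: 'r tensor)" if g: "g \<in> arr W" for g
  proof (cases "g = e1 \<or> g = e2 \<or> g = e3")
    case False
    have gW: "(g, True) \<in> set W" "(g, False) \<in> set W"
      using g vstring_partner'[OF vW, of g True] unfolding arr_def by auto
    have gpin: "pin ?Lo g" using gW False unfolding pin_def W_def by auto
    have o1: "in1 W' g h = in1 W g h" "in2 W' g h = in2 W g h" if "(h, b) \<in> set W" for h b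
      using A.old_in1[OF gpin] vstring_partner'[OF vW that] unfolding W_def W'_def by auto
    have s: "sub1 W' g = filter (\<lambda>(h, b). in1 W g h) W'" "sub2 W' g = filter (\<lambda>(h, b). in2 W g h) W'"
      unfolding sub1_eq sub2_eq using o1 setW by (auto intro!: filter_cong)
    have mv: "homotopic ([(e3, False), (e1, True)] @ u' @ [(e1, False), (e2, True)] @ v' @ [(e2, False), (e3, True)] @ x')
        ([(e1, True), (e3, False)] @ u' @ [(e2, True), (e1, False)] @ v' @ [(e3, True), (e2, False)] @ x')"
      if "vstring ([(e3, False), (e1, True)] @ u' @ [(e1, False), (e2, True)] @ v' @ [(e2, False), (e3, True)] @ x')"
      for u' v' x'
      using hstep_hom[OF hstep.move_c1[OF that]] by simp
    note r = A.regions[OF gpin]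
    note K1 = A.slot_K[OF r(1) r(2)] and K2 = A.slot_K[OF r(2) r(1)]
    have h1: "homotopic (filter (\<lambda>(h, b). in1 W g h) W) (filter (\<lambda>(h, b). in1 W g h) W')"
      unfolding W_def W'_def
      apply (rule A.old_filter_hom[of _ "in1 W g"])
      using vW mv K1 unfolding W_def in1_def btw_def by auto
    have h2: "homotopic (filter (\<lambda>(h, b). in2 W g h) W) (filter (\<lambda>(h, b). in2 W g h) W')"
      unfolding W_def W'_def
      apply (rule A.old_filter_hom[of _ "in2 W g"])
      using vW mv K2 unfolding W_def in2_def btw_def by auto
    show ?thesis
      apply (rule T_hom) unfolding s
      using h1 h2 homotopic_sym unfolding sub1_eq sub2_eq by auto
  next
    case True
    let ?Sp = "{e1, e2, e3}"
    have setW0: "set W = {(e3, False), (e1, True), (e1, False), (e2, True), (e2, False), (e3, True)} \<union> set ?Lo"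
      unfolding W_def by auto
    have oldpin: "pin ?Lo h" if "(h, b) \<in> set W" "h \<notin> ?Sp" for h b
    proof -
      have "(h, True) \<in> set W" "(h, False) \<in> set W" using vstring_partner'[OF vW that(1)] by auto
      then show ?thesis using that(2) unfolding setW0 pin_def by auto
    qed
    have oldpin': "pin ?Lo h" if "(h, b) \<in> set W'" "h \<notin> ?Sp" for h b
      using oldpin that setW by blast
    have nsp: "\<not> pin L h" "\<not> pout L ?Lo h" if "h \<in> ?Sp" "set L \<subseteq> set ?Lo" for h L
      using that old unfolding pin_def pout_def by fastforce+
    have nsp': "\<not> pin u h \<and> \<not> pin v h \<and> \<not> pin x h \<and> \<not> pout u ?Lo h \<and> \<not> pout v ?Lo h \<and> \<not> pout x ?Lo h"
      if "h \<in> ?Sp" for h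
    proof -
      have "(h, True) \<notin> set ?Lo" using old[of h True] that by auto
      then show ?thesis unfolding pin_def pout_def by auto
    qed
    have oldS: "h \<notin> S" if "(h, b) \<in> set L" "set L \<subseteq> set ?Lo" "S \<subseteq> ?Sp" for h b L S
      using old[of h b] that by auto
    have fresh: "E \<notin> fst ` set (filter P L)" if "E \<in> ?Sp" "set L \<subseteq> set ?Lo" for E P L
      using old that by fastforce
    have vf: "vstring (filter (\<lambda>(h, b). R h) ?Lo)" for R
    proof -
      have fL: "filter (\<lambda>(h, b). R h \<and> h \<notin> ?Sp) L = filter (\<lambda>(h, b). R h) L" if "set L \<subseteq> set ?Lo" for L
        by (rule filter_cong2) (use old that in blast)
      have "filter (\<lambda>(h, b). R h \<and> h \<notin> ?Sp) W = filter (\<lambda>(h, b). R h) ?Lo"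
      proof -
        have "set u \<subseteq> set ?Lo" "set v \<subseteq> set ?Lo" "set x \<subseteq> set ?Lo" by auto
        then show ?thesis unfolding W_def using ne fL by simp
      qed
      then show ?thesis using vstring_filter[OF vW, of "\<lambda>h. R h \<and> h \<notin> ?Sp"] by simp
    qed
    note rW1 = A.in_region(1)[of _ e1 1 "length u + 2"] and rW3 = A.in_region(3)[of _ e2 "length u + 3" "length u + length v + 4"]
      and rW5 = A.in_region(5)[of _ e3 "length u + length v + 5" 0]
    note rV1 = B.in_region(1)[of _ e1 0 "length u + 3"] and rV3 = B.in_region(3)[of _ e2 "length u + 2" "length u + length v + 5"]
      and rV5 = B.in_region(5)[of _ e3 "length u + length v + 4" 1]
    have regW: "in1 W e1 h = pin u h" "in2 W e1 h = pout u ?Lo h" "in1 W e2 h = pin v h" "in2 W e2 h = pout v ?Lo h"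
      "in1 W e3 h = pin x h" "in2 W e3 h = pout x ?Lo h" if "pin ?Lo h" for h
      using rW1[OF that] rW3[OF that] rW5[OF that] pW unfolding W_def by auto
    have regW': "in1 W' e1 h = pin u h" "in2 W' e1 h = pout u ?Lo h" "in1 W' e2 h = pin v h" "in2 W' e2 h = pout v ?Lo h"
      "in1 W' e3 h = pin x h" "in2 W' e3 h = pout x ?Lo h" if "pin ?Lo h" for h
      using rV1[OF that] rV3[OF that] rV5[OF that] pW' unfolding W'_def by auto
    have spW: "in1 W e1 h = (h \<in> {})" "in1 W e2 h = (h \<in> {})" "in1 W e3 h = (h \<in> {})"
      "in2 W e1 h = (h \<in> {e2, e3})" "in2 W e2 h = (h \<in> {e1, e3})" "in2 W e3 h = (h \<in> {e1, e2})"
      if "h \<in> ?Sp" for h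
      using that ne unfolding in1_def in2_def btw_def by (auto simp: pW in_arc_def)
    have spW': "in1 W' e1 h = (h \<in> {})" "in1 W' e2 h = (h \<in> {})" "in1 W' e3 h = (h \<in> {})"
      "in2 W' e1 h = (h \<in> {})" "in2 W' e2 h = (h \<in> {})" "in2 W' e3 h = (h \<in> {})"
      if "h \<in> ?Sp" for h
      using that ne unfolding in1_def in2_def btw_def by (auto simp: pW' in_arc_def)
    have subs:
      "sub1 W e1 = filter (\<lambda>(h, b). pin u h \<or> h \<in> {}) W" "sub1 W' e1 = filter (\<lambda>(h, b). pin u h \<or> h \<in> {}) W'"
      "sub1 W e2 = filter (\<lambda>(h, b). pin v h \<or> h \<in> {}) W" "sub1 W' e2 = filter (\<lambda>(h, b). pin v h \<or> h \<in> {}) W'"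
      "sub1 W e3 = filter (\<lambda>(h, b). pin x h \<or> h \<in> {}) W" "sub1 W' e3 = filter (\<lambda>(h, b). pin x h \<or> h \<in> {}) W'"
      "sub2 W e1 = filter (\<lambda>(h, b). pout u ?Lo h \<or> h \<in> {e2, e3}) W" "sub2 W' e1 = filter (\<lambda>(h, b). pout u ?Lo h \<or> h \<in> {}) W'"
      "sub2 W e2 = filter (\<lambda>(h, b). pout v ?Lo h \<or> h \<in> {e1, e3}) W" "sub2 W' e2 = filter (\<lambda>(h, b). pout v ?Lo h \<or> h \<in> {}) W'"
      "sub2 W e3 = filter (\<lambda>(h, b). pout x ?Lo h \<or> h \<in> {e1, e2}) W" "sub2 W' e3 = filter (\<lambda>(h, b). pout x ?Lo h \<or> h \<in> {}) W'"
      by ((rule sub_char[where Sp = ?Sp] sub_char2[where Sp = ?Sp]);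
          (use regW regW' oldpin oldpin' spW spW' nsp' in auto))+
    have sLo: "set u \<subseteq> set ?Lo" "set v \<subseteq> set ?Lo" "set x \<subseteq> set ?Lo" by auto
    have spf: "\<not> pin L e" "\<not> pout L ?Lo e" if "e \<in> ?Sp" "set L \<subseteq> set ?Lo" for e L
      using nsp that by blast+
    have segs: "filter (\<lambda>(h, b). R h \<or> h \<in> S) L = filter (\<lambda>(h, b). R h) L"
      if "S \<subseteq> ?Sp" "set L \<subseteq> set ?Lo" for R S L
      using seg_filter[of L S R] oldS that by blast
    have e1eq: "sub1 W' e1 = sub1 W e1" "sub1 W' e2 = sub1 W e2" "sub1 W' e3 = sub1 W e3"
      unfolding subs unfolding W_def W'_def using spf[OF _ sLo(1)] spf[OF _ sLo(2)] spf[OF _ sLo(3)] by auto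
    have fE: "e \<notin> fst ` set (filter P u @ filter P' v)" "e \<notin> fst ` set (filter P v @ filter P' x)"
      "e \<notin> fst ` set (filter P u @ filter P' x)" if "e \<in> ?Sp" for e P P'
      using fresh[OF that, of u P] fresh[OF that, of v P'] fresh[OF that, of x P'] fresh[OF that, of v P] by auto
    have vfa: "vstring (filter (\<lambda>(h, b). R h) u @ filter (\<lambda>(h, b). R h) v @ filter (\<lambda>(h, b). R h) x)" for R
      using vf[of R] by simp
    have s2W1: "sub2 W e1 = [(e3, False), (e2, True)] @ filter (\<lambda>(h, b). pout u ?Lo h) v @ [(e2, False), (e3, True)] @ filter (\<lambda>(h, b). pout u ?Lo h) x"
      unfolding subs unfolding W_def filter_append
      using segs[of "{e2, e3}" u] segs[of "{e2, e3}" v] segs[of "{e2, e3}" x] sLo spf pout_self[of u ?Lo] ne by simp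
    have s2W'1: "sub2 W' e1 = filter (\<lambda>(h, b). pout u ?Lo h) v @ filter (\<lambda>(h, b). pout u ?Lo h) x"
      unfolding subs unfolding W'_def filter_append
      using segs[of "{}" u] segs[of "{}" v] segs[of "{}" x] sLo spf pout_self[of u ?Lo] ne by simp
    have s2W2: "sub2 W e2 = [(e3, False), (e1, True)] @ filter (\<lambda>(h, b). pout v ?Lo h) u @ [(e1, False), (e3, True)] @ filter (\<lambda>(h, b). pout v ?Lo h) x"
      unfolding subs unfolding W_def filter_append
      using segs[of "{e1, e3}" u] segs[of "{e1, e3}" v] segs[of "{e1, e3}" x] sLo spf pout_self[of v ?Lo] ne by simp
    have s2W'2: "sub2 W' e2 = filter (\<lambda>(h, b). pout v ?Lo h) u @ filter (\<lambda>(h, b). pout v ?Lo h) x"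
      unfolding subs unfolding W'_def filter_append
      using segs[of "{}" u] segs[of "{}" v] segs[of "{}" x] sLo spf pout_self[of v ?Lo] ne by simp
    have s2W3: "sub2 W e3 = [(e1, True)] @ filter (\<lambda>(h, b). pout x ?Lo h) u @ [(e1, False), (e2, True)] @ filter (\<lambda>(h, b). pout x ?Lo h) v @ [(e2, False)]"
      unfolding subs unfolding W_def filter_append
      using segs[of "{e1, e2}" u] segs[of "{e1, e2}" v] segs[of "{e1, e2}" x] sLo spf pout_self[of x ?Lo] ne by simp
    have s2W'3: "sub2 W' e3 = filter (\<lambda>(h, b). pout x ?Lo h) u @ filter (\<lambda>(h, b). pout x ?Lo h) v"
      unfolding subs unfolding W'_def filter_append
      using segs[of "{}" u] segs[of "{}" v] segs[of "{}" x] sLo spf pout_self[of x ?Lo] ne by simp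
    have vv1: "vstring (filter (\<lambda>(h, b). pout u ?Lo h) v @ filter (\<lambda>(h, b). pout u ?Lo h) x)"
      using vfa[of "pout u ?Lo"] pout_self[of u ?Lo] by simp
    have vv2: "vstring (filter (\<lambda>(h, b). pout v ?Lo h) u @ filter (\<lambda>(h, b). pout v ?Lo h) x)"
      using vfa[of "pout v ?Lo"] pout_self[of v ?Lo] by simp
    have vv3: "vstring (filter (\<lambda>(h, b). pout x ?Lo h) u @ filter (\<lambda>(h, b). pout x ?Lo h) v)"
      using vfa[of "pout x ?Lo"] pout_self[of x ?Lo] by simp
    have H1: "homotopic (sub2 W e1) (sub2 W' e1)"
      unfolding s2W1 s2W'1 by (rule hom_move_b1[OF vv1]) (use fE ne in auto)
    have H2: "homotopic (sub2 W e2) (sub2 W' e2)"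
      unfolding s2W2 s2W'2 by (rule hom_move_b1[OF vv2]) (use fE ne in auto)
    have H3: "homotopic (sub2 W e3) (sub2 W' e3)"
      unfolding s2W3 s2W'3 by (rule hom_move_b2[OF vv3]) (use fE ne in auto)
    show ?thesis
      using True e1eq H1 H2 H3 T_hom homotopic_refl homotopic_sym by metis
  qed
  then show ?thesis unfolding nu_gen_T arrW by simp
qed


lemma nu_gen_move_c2:
  fixes e1 e2 e3 :: nat and u v x :: vword
  defines "W \<equiv> [(e3, False), (e1, True)] @ u @ [(e2, False), (e3, True)] @ v @ [(e1, False), (e2, True)] @ x"
    and "W' \<equiv> [(e1, True), (e3, False)] @ u @ [(e3, True), (e2, False)] @ v @ [(e2, True), (e1, False)] @ x"
  assumes vW: "vstring W"
  shows "(nu_gen W' :: ('r::comm_ring_1) tensor) = nu_gen W"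
proof -
  have dW: "distinct W" using vW vstring_distinct by blast
  interpret A: six "(e3, False)" "(e1, True)" "(e2, False)" "(e3, True)" "(e1, False)" "(e2, True)" u v x
    by unfold_locales (use dW in \<open>simp add: W_def\<close>)
  have dW': "distinct W'" using A.dW' unfolding W'_def by simp
  interpret B: six "(e1, True)" "(e3, False)" "(e3, True)" "(e2, False)" "(e2, True)" "(e1, False)" u v x
    by unfold_locales (use dW' in \<open>simp add: W'_def\<close>)
  have hs: "hstep W W'" unfolding W_def W'_def using hstep.move_c2 vW[unfolded W_def] by simp
  have vW': "vstring W'" using hstep_vstring[OF hs] by blast
  have ne: "e1 \<noteq> e2" "e2 \<noteq> e3" "e1 \<noteq> e3" using dW unfolding W_def by auto
  let ?Lo = "u @ v @ x"
  have old: "h \<noteq> e1 \<and> h \<noteq> e2 \<and> h \<noteq> e3" if "(h, b) \<in> set ?Lo" for h b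
    using dW that unfolding W_def by (cases b) auto
  have setW: "set W' = set W" unfolding W_def W'_def by auto
  have arrW: "arr W' = arr W" unfolding arr_def setW ..
  have n: "A.n = length u" "A.m = length v" by simp_all
  have pW: "pos W (e3, False) = 0" "pos W (e1, True) = 1" "pos W (e2, False) = length u + 2"
    "pos W (e3, True) = length u + 3" "pos W (e1, False) = length u + length v + 4" "pos W (e2, True) = length u + length v + 5"
    using A.posW unfolding W_def by simp_all
  have pW': "pos W' (e1, True) = 0" "pos W' (e3, False) = 1" "pos W' (e3, True) = length u + 2"
    "pos W' (e2, False) = length u + 3" "pos W' (e2, True) = length u + length v + 4" "pos W' (e1, False) = length u + length v + 5"
    using B.posW unfolding W'_def by simp_all
  have T: "T W' g = (T W g :: 'r tensor)" if g: "g \<in> arr W" for g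
  proof (cases "g = e1 \<or> g = e2 \<or> g = e3")
    case False
    have gW: "(g, True) \<in> set W" "(g, False) \<in> set W"
      using g vstring_partner'[OF vW, of g True] unfolding arr_def by auto
    have gpin: "pin ?Lo g" using gW False unfolding pin_def W_def by auto
    have o1: "in1 W' g h = in1 W g h" "in2 W' g h = in2 W g h" if "(h, b) \<in> set W" for h b
      using A.old_in1[OF gpin] vstring_partner'[OF vW that] unfolding W_def W'_def by auto
    have s: "sub1 W' g = filter (\<lambda>(h, b). in1 W g h) W'" "sub2 W' g = filter (\<lambda>(h, b). in2 W g h) W'"
      unfolding sub1_eq sub2_eq using o1 setW by (auto intro!: filter_cong)
    have mv: "homotopic ([(e3, False), (e1, True)] @ u' @ [(e2, False), (e3, True)] @ v' @ [(e1, False), (e2, True)] @ x')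
        ([(e1, True), (e3, False)] @ u' @ [(e3, True), (e2, False)] @ v' @ [(e2, True), (e1, False)] @ x')"
      if "vstring ([(e3, False), (e1, True)] @ u' @ [(e2, False), (e3, True)] @ v' @ [(e1, False), (e2, True)] @ x')"
      for u' v' x'
      using hstep_hom[OF hstep.move_c2[OF that]] by simp
    note r = A.regions[OF gpin]
    note K1 = A.slot_K[OF r(1) r(2)] and K2 = A.slot_K[OF r(2) r(1)]
    have h1: "homotopic (filter (\<lambda>(h, b). in1 W g h) W) (filter (\<lambda>(h, b). in1 W g h) W')"
      unfolding W_def W'_def
      apply (rule A.old_filter_hom[of _ "in1 W g"])
      using vW mv K1 unfolding W_def in1_def btw_def by auto
    have h2: "homotopic (filter (\<lambda>(h, b). in2 W g h) W) (filter (\<lambda>(h, b). in2 W g h) W')"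
      unfolding W_def W'_def
      apply (rule A.old_filter_hom[of _ "in2 W g"])
      using vW mv K2 unfolding W_def in2_def btw_def by auto
    show ?thesis
      apply (rule T_hom) unfolding s
      using h1 h2 homotopic_sym unfolding sub1_eq sub2_eq by auto
  next
    case True
    let ?Sp = "{e1, e2, e3}"
    have setW0: "set W = {(e3, False), (e1, True), (e2, False), (e3, True), (e1, False), (e2, True)} \<union> set ?Lo"
      unfolding W_def by auto
    have oldpin: "pin ?Lo h" if "(h, b) \<in> set W" "h \<notin> ?Sp" for h b
    proof -
      have "(h, True) \<in> set W" "(h, False) \<in> set W" using vstring_partner'[OF vW that(1)] by auto
      then show ?thesis using that(2) unfolding setW0 pin_def by auto
    qed
    have oldpin': "pin ?Lo h" if "(h, b) \<in> set W'" "h \<notin> ?Sp" for h b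
      using oldpin that setW by blast
    have nsp: "\<not> pin L h" "\<not> pout L ?Lo h" if "h \<in> ?Sp" "set L \<subseteq> set ?Lo" for h L
      using that old unfolding pin_def pout_def by fastforce+
    have nsp': "\<not> pin u h \<and> \<not> pin v h \<and> \<not> pin x h \<and> \<not> pout u ?Lo h \<and> \<not> pout v ?Lo h \<and> \<not> pout x ?Lo h"
      if "h \<in> ?Sp" for h
    proof -
      have "(h, True) \<notin> set ?Lo" using old[of h True] that by auto
      then show ?thesis unfolding pin_def pout_def by auto
    qed
    have oldS: "h \<notin> S" if "(h, b) \<in> set L" "set L \<subseteq> set ?Lo" "S \<subseteq> ?Sp" for h b L S
      using old[of h b] that by auto
    have fresh: "E \<notin> fst ` set (filter P L)" if "E \<in> ?Sp" "set L \<subseteq> set ?Lo" for E P L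
      using old that by fastforce
    have vf: "vstring (filter (\<lambda>(h, b). R h) ?Lo)" for R
    proof -
      have fL: "filter (\<lambda>(h, b). R h \<and> h \<notin> ?Sp) L = filter (\<lambda>(h, b). R h) L" if "set L \<subseteq> set ?Lo" for L
        by (rule filter_cong2) (use old that in blast)
      have "filter (\<lambda>(h, b). R h \<and> h \<notin> ?Sp) W = filter (\<lambda>(h, b). R h) ?Lo"
      proof -
        have "set u \<subseteq> set ?Lo" "set v \<subseteq> set ?Lo" "set x \<subseteq> set ?Lo" by auto
        then show ?thesis unfolding W_def using ne fL by simp
      qed
      then show ?thesis using vstring_filter[OF vW, of "\<lambda>h. R h \<and> h \<notin> ?Sp"] by simp
    qed
    note rW1 = A.in_region(6)[of _ e1 1 "length u + length v + 4"] and rW3 = A.in_region(4)[of _ e2 "length u + length v + 5" "length u + 2"]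
      and rW5 = A.in_region(2)[of _ e3 "length u + 3" 0]
    note rV1 = B.in_region(6)[of _ e1 0 "length u + length v + 5"] and rV3 = B.in_region(4)[of _ e2 "length u + length v + 4" "length u + 3"]
      and rV5 = B.in_region(2)[of _ e3 "length u + 2" 1]
    have regW: "in2 W e1 h = pin x h" "in1 W e1 h = pout x ?Lo h" "in2 W e2 h = pin v h" "in1 W e2 h = pout v ?Lo h"
      "in2 W e3 h = pin u h" "in1 W e3 h = pout u ?Lo h" if "pin ?Lo h" for h
      using rW1[OF that] rW3[OF that] rW5[OF that] pW unfolding W_def by auto
    have regW': "in2 W' e1 h = pin x h" "in1 W' e1 h = pout x ?Lo h" "in2 W' e2 h = pin v h" "in1 W' e2 h = pout v ?Lo h"
      "in2 W' e3 h = pin u h" "in1 W' e3 h = pout u ?Lo h" if "pin ?Lo h" for h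
      using rV1[OF that] rV3[OF that] rV5[OF that] pW' unfolding W'_def by auto
    have spW: "in2 W e1 h = (h \<in> {})" "in2 W e2 h = (h \<in> {})" "in2 W e3 h = (h \<in> {})"
      "in1 W e1 h = (h \<in> {})" "in1 W e2 h = (h \<in> {})" "in1 W e3 h = (h \<in> {})"
      if "h \<in> ?Sp" for h
      using that ne unfolding in1_def in2_def btw_def by (auto simp: pW in_arc_def)
    have spW': "in2 W' e1 h = (h \<in> {})" "in2 W' e2 h = (h \<in> {})" "in2 W' e3 h = (h \<in> {})"
      "in1 W' e1 h = (h \<in> {e2, e3})" "in1 W' e2 h = (h \<in> {e1, e3})" "in1 W' e3 h = (h \<in> {e1, e2})"
      if "h \<in> ?Sp" for h
      using that ne unfolding in1_def in2_def btw_def by (auto simp: pW' in_arc_def)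
    have nsp': "\<not> pin u h \<and> \<not> pin v h \<and> \<not> pin x h \<and> \<not> pout u ?Lo h \<and> \<not> pout v ?Lo h \<and> \<not> pout x ?Lo h"
      if "h \<in> ?Sp" for h
    proof -
      have "(h, True) \<notin> set ?Lo" using old[of h True] that by auto
      then show ?thesis unfolding pin_def pout_def by auto
    qed
    have oldS: "h \<notin> S" if "(h, b) \<in> set L" "set L \<subseteq> set ?Lo" "S \<subseteq> ?Sp" for h b L S
      using old[of h b] that by auto
    have fresh: "E \<notin> fst ` set (filter P L)" if "E \<in> ?Sp" "set L \<subseteq> set ?Lo" for E P L
      using old that by fastforce
    have vf: "vstring (filter (\<lambda>(h, b). R h) ?Lo)" for R
    proof -
      have fL: "filter (\<lambda>(h, b). R h \<and> h \<notin> ?Sp) L = filter (\<lambda>(h, b). R h) L" if "set L \<subseteq> set ?Lo" for L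
        by (rule filter_cong2) (use old that in blast)
      have "filter (\<lambda>(h, b). R h \<and> h \<notin> ?Sp) W = filter (\<lambda>(h, b). R h) ?Lo"
      proof -
        have "set u \<subseteq> set ?Lo" "set v \<subseteq> set ?Lo" "set x \<subseteq> set ?Lo" by auto
        then show ?thesis unfolding W_def using ne fL by simp
      qed
      then show ?thesis using vstring_filter[OF vW, of "\<lambda>h. R h \<and> h \<notin> ?Sp"] by simp
    qed
    have subs:
      "sub2 W e1 = filter (\<lambda>(h, b). pin x h \<or> h \<in> {}) W" "sub2 W' e1 = filter (\<lambda>(h, b). pin x h \<or> h \<in> {}) W'"
      "sub2 W e2 = filter (\<lambda>(h, b). pin v h \<or> h \<in> {}) W" "sub2 W' e2 = filter (\<lambda>(h, b). pin v h \<or> h \<in> {}) W'"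
      "sub2 W e3 = filter (\<lambda>(h, b). pin u h \<or> h \<in> {}) W" "sub2 W' e3 = filter (\<lambda>(h, b). pin u h \<or> h \<in> {}) W'"
      "sub1 W e1 = filter (\<lambda>(h, b). pout x ?Lo h \<or> h \<in> {}) W" "sub1 W' e1 = filter (\<lambda>(h, b). pout x ?Lo h \<or> h \<in> {e2, e3}) W'"
      "sub1 W e2 = filter (\<lambda>(h, b). pout v ?Lo h \<or> h \<in> {}) W" "sub1 W' e2 = filter (\<lambda>(h, b). pout v ?Lo h \<or> h \<in> {e1, e3}) W'"
      "sub1 W e3 = filter (\<lambda>(h, b). pout u ?Lo h \<or> h \<in> {}) W" "sub1 W' e3 = filter (\<lambda>(h, b). pout u ?Lo h \<or> h \<in> {e1, e2}) W'"
      by ((rule sub_char[where Sp = ?Sp] sub_char2[where Sp = ?Sp]);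
          (use regW regW' oldpin oldpin' spW spW' nsp' in auto))+
    have sLo: "set u \<subseteq> set ?Lo" "set v \<subseteq> set ?Lo" "set x \<subseteq> set ?Lo" by auto
    have spf: "\<not> pin L e" "\<not> pout L ?Lo e" if "e \<in> ?Sp" "set L \<subseteq> set ?Lo" for e L
      using nsp that by blast+
    have segs: "filter (\<lambda>(h, b). R h \<or> h \<in> S) L = filter (\<lambda>(h, b). R h) L"
      if "S \<subseteq> ?Sp" "set L \<subseteq> set ?Lo" for R S L
      using seg_filter[of L S R] oldS that by blast
    have e1eq: "sub2 W' e1 = sub2 W e1" "sub2 W' e2 = sub2 W e2" "sub2 W' e3 = sub2 W e3"
      unfolding subs unfolding W_def W'_def using spf[OF _ sLo(1)] spf[OF _ sLo(2)] spf[OF _ sLo(3)] by auto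
    have fE: "e \<notin> fst ` set (filter P u @ filter P' v)" "e \<notin> fst ` set (filter P v @ filter P' x)"
      "e \<notin> fst ` set (filter P u @ filter P' x)" if "e \<in> ?Sp" for e P P'
      using fresh[OF that, of u P] fresh[OF that, of v P'] fresh[OF that, of x P'] fresh[OF that, of v P] by auto
    have vfa: "vstring (filter (\<lambda>(h, b). R h) u @ filter (\<lambda>(h, b). R h) v @ filter (\<lambda>(h, b). R h) x)" for R
      using vf[of R] by simp
    have s2W1: "sub1 W' e1 = [(e3, False)] @ filter (\<lambda>(h, b). pout x ?Lo h) u @ [(e3, True), (e2, False)] @ filter (\<lambda>(h, b). pout x ?Lo h) v @ [(e2, True)]"
      unfolding subs unfolding W'_def filter_append
      using segs[of "{e2, e3}" u] segs[of "{e2, e3}" v] segs[of "{e2, e3}" x] sLo spf pout_self[of x ?Lo] ne by simp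
    have s2W'1: "sub1 W e1 = filter (\<lambda>(h, b). pout x ?Lo h) u @ filter (\<lambda>(h, b). pout x ?Lo h) v"
      unfolding subs unfolding W_def filter_append
      using segs[of "{}" u] segs[of "{}" v] segs[of "{}" x] sLo spf pout_self[of x ?Lo] ne by simp
    have s2W2: "sub1 W' e2 = [(e1, True), (e3, False)] @ filter (\<lambda>(h, b). pout v ?Lo h) u @ [(e3, True), (e1, False)] @ filter (\<lambda>(h, b). pout v ?Lo h) x"
      unfolding subs unfolding W'_def filter_append
      using segs[of "{e1, e3}" u] segs[of "{e1, e3}" v] segs[of "{e1, e3}" x] sLo spf pout_self[of v ?Lo] ne by simp
    have s2W'2: "sub1 W e2 = filter (\<lambda>(h, b). pout v ?Lo h) u @ filter (\<lambda>(h, b). pout v ?Lo h) x"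
      unfolding subs unfolding W_def filter_append
      using segs[of "{}" u] segs[of "{}" v] segs[of "{}" x] sLo spf pout_self[of v ?Lo] ne by simp
    have s2W3: "sub1 W' e3 = [(e1, True), (e2, False)] @ filter (\<lambda>(h, b). pout u ?Lo h) v @ [(e2, True), (e1, False)] @ filter (\<lambda>(h, b). pout u ?Lo h) x"
      unfolding subs unfolding W'_def filter_append
      using segs[of "{e1, e2}" u] segs[of "{e1, e2}" v] segs[of "{e1, e2}" x] sLo spf pout_self[of u ?Lo] ne by simp
    have s2W'3: "sub1 W e3 = filter (\<lambda>(h, b). pout u ?Lo h) v @ filter (\<lambda>(h, b). pout u ?Lo h) x"
      unfolding subs unfolding W_def filter_append
      using segs[of "{}" u] segs[of "{}" v] segs[of "{}" x] sLo spf pout_self[of u ?Lo] ne by simp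
    have vv1: "vstring (filter (\<lambda>(h, b). pout x ?Lo h) u @ filter (\<lambda>(h, b). pout x ?Lo h) v)"
      using vfa[of "pout x ?Lo"] pout_self[of x ?Lo] by simp
    have vv2: "vstring (filter (\<lambda>(h, b). pout v ?Lo h) u @ filter (\<lambda>(h, b). pout v ?Lo h) x)"
      using vfa[of "pout v ?Lo"] pout_self[of v ?Lo] by simp
    have vv3: "vstring (filter (\<lambda>(h, b). pout u ?Lo h) v @ filter (\<lambda>(h, b). pout u ?Lo h) x)"
      using vfa[of "pout u ?Lo"] pout_self[of u ?Lo] by simp
    have H1: "homotopic (sub1 W' e1) (sub1 W e1)"
      unfolding s2W1 s2W'1 by (rule hom_move_b3[OF vv1]) (use fE ne in auto)
    have H2: "homotopic (sub1 W' e2) (sub1 W e2)"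
      unfolding s2W2 s2W'2 by (rule hom_move_b4[OF vv2]) (use fE ne in auto)
    have H3: "homotopic (sub1 W' e3) (sub1 W e3)"
      unfolding s2W3 s2W'3 by (rule hom_move_b4[OF vv3]) (use fE ne in auto)
    show ?thesis
      using True e1eq H1 H2 H3 T_hom homotopic_refl by metis
  qed
  then show ?thesis unfolding nu_gen_T arrW by simp
qed


lemma nu_gen_hstep: "hstep w w' \<Longrightarrow> (nu_gen w :: ('r::comm_ring_1) tensor) = nu_gen w'"
proof (induction rule: hstep.induct)
  case (rot w) then show ?case using nu_gen_rot by metis
next
  case (ren w f) then show ?case using nu_gen_ren by metis
next
  case (move_a u v e) then show ?case using nu_gen_move_a by metis
next
  case (move_b u v e1 e2 xs ys) then show ?case using nu_gen_move_b by metis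
next
  case (move_c1 e3 e1 u e2 v x) then show ?case using nu_gen_move_c1 by metis
next
  case (move_c2 e3 e1 u e2 v x) then show ?case using nu_gen_move_c2 by metis
qed

lemma nu_gen_hom: "homotopic w w' \<Longrightarrow> (nu_gen w :: ('r::comm_ring_1) tensor) = nu_gen w'"
  unfolding homotopic_def
proof (induction rule: rtranclp_induct)
  case base then show ?case by simp
next
  case (step y z)
  then show ?case using nu_gen_hstep[of y z] nu_gen_hstep[of z y] by metis
qed


lemma nu_cls_cls: "vstring w \<Longrightarrow> (nu_cls (cls w) :: ('r::comm_ring_1) tensor) = nu_gen w"
proof -
  assume v: "vstring w"
  have ex: "\<exists>w'. w' \<in> cls w \<and> vstring w'" using v homotopic_refl unfolding cls_def by blast
  define w' where "w' = (SOME w'. w' \<in> cls w \<and> vstring w')"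
  have "w' \<in> cls w" using someI_ex[OF ex] unfolding w'_def by blast
  then have "homotopic w w'" unfolding cls_def by simp
  then have "(nu_gen w' :: 'r tensor) = nu_gen w" using nu_gen_hom homotopic_sym by metis
  then show ?thesis unfolding nu_cls_def w'_def by simp
qed

lemma NT_E: "c \<in> NT \<Longrightarrow> (\<And>w. vstring w \<Longrightarrow> \<not> htrivial w \<Longrightarrow> c = cls w \<Longrightarrow> P) \<Longrightarrow> P"
  unfolding NT_def by blast

definition ind :: "vword \<Rightarrow> vword set \<Rightarrow> 'r::comm_ring_1" where
  "ind p a = (if \<not> htrivial p \<and> a = cls p then 1 else 0)"

lemma gen2_ind: "gen2 p q [a, b] = ind p a * ind q b"
  unfolding gen2_def ind_def by auto

lemma gen2_len: "length ys \<noteq> 2 \<Longrightarrow> gen2 p q ys = 0"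
  unfolding gen2_def by auto

lemma nu_gen_len: "length ys \<noteq> 2 \<Longrightarrow> nu_gen w ys = 0"
  unfolding nu_gen_def by (simp add: gen2_len)

lemma nu_gen_2: "nu_gen w [a, b] = (\<Sum>e\<in>arr w. ind (sub1 w e) a * ind (sub2 w e) b - ind (sub2 w e) a * ind (sub1 w e) b)"
  unfolding nu_gen_def by (simp add: gen2_ind)

lemma nu_gen_anti: "nu_gen w [b, a] = - (nu_gen w [a, b] :: 'r::comm_ring_1)"
proof -
  have "(ind (sub1 w e) b * ind (sub2 w e) a - ind (sub2 w e) b * ind (sub1 w e) a :: 'r) =
     - (ind (sub1 w e) a * ind (sub2 w e) b - ind (sub2 w e) a * ind (sub1 w e) b)" for e
    by (simp add: mult.commute)
  then show ?thesis unfolding nu_gen_2 by (simp only: sum_negf)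
qed

lemma gen2_supp: "gen2 p q ys \<noteq> 0 \<Longrightarrow> ys = [cls p, cls q] \<and> \<not> htrivial p \<and> \<not> htrivial q"
  unfolding gen2_def by (auto split: if_splits)

lemma sub_vstring: "vstring w \<Longrightarrow> vstring (sub1 w e) \<and> vstring (sub2 w e)"
  unfolding sub1_eq sub2_eq using vstring_filter by blast

lemma cls_NT: "vstring p \<Longrightarrow> \<not> htrivial p \<Longrightarrow> cls p \<in> NT"
  unfolding NT_def by blast

lemma nu_gen_supp:
  assumes v: "vstring w" and nz: "nu_gen w ys \<noteq> (0::'r::comm_ring_1)"
  shows "\<exists>e\<in>arr w. (ys = [cls (sub1 w e), cls (sub2 w e)] \<or> ys = [cls (sub2 w e), cls (sub1 w e)])
     \<and> \<not> htrivial (sub1 w e) \<and> \<not> htrivial (sub2 w e)"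
proof -
  have "(\<Sum>e\<in>arr w. gen2 (sub1 w e) (sub2 w e) ys - gen2 (sub2 w e) (sub1 w e) ys) \<noteq> (0::'r)"
    using nz unfolding nu_gen_def by simp
  then obtain e where e: "e \<in> arr w" and
    t: "gen2 (sub1 w e) (sub2 w e) ys - gen2 (sub2 w e) (sub1 w e) ys \<noteq> (0::'r)"
    by (rule sum.not_neutral_contains_not_neutral) blast
  then have "gen2 (sub1 w e) (sub2 w e) ys \<noteq> (0::'r) \<or> gen2 (sub2 w e) (sub1 w e) ys \<noteq> (0::'r)" by auto
  then show ?thesis
  proof
    assume "gen2 (sub1 w e) (sub2 w e) ys \<noteq> (0::'r)"
    from gen2_supp[OF this] show ?thesis using e by blast
  next
    assume "gen2 (sub2 w e) (sub1 w e) ys \<noteq> (0::'r)"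
    from gen2_supp[OF this] show ?thesis using e by blast
  qed
qed

lemma nu_gen_supp_finite: "finite {ys. nu_gen w ys \<noteq> (0::'r::comm_ring_1)}" if v: "vstring w"
proof -
  have "{ys. nu_gen w ys \<noteq> (0::'r)} \<subseteq> (\<Union>e\<in>arr w. {[cls (sub1 w e), cls (sub2 w e)], [cls (sub2 w e), cls (sub1 w e)]})"
    using nu_gen_supp[OF v] by blast
  moreover have "finite (\<Union>e\<in>arr w. {[cls (sub1 w e), cls (sub2 w e)], [cls (sub2 w e), cls (sub1 w e)]})"
    using finite_arr by auto
  ultimately show ?thesis by (rule finite_subset)
qed

lemma nu_gen_supp_NT: assumes v: "vstring w" and nz: "nu_gen w ys \<noteq> (0::'r::comm_ring_1)"
  shows "length ys = 2 \<and> set ys \<subseteq> NT"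
proof -
  obtain e where e: "e \<in> arr w" and ys: "ys = [cls (sub1 w e), cls (sub2 w e)] \<or> ys = [cls (sub2 w e), cls (sub1 w e)]"
    and nt: "\<not> htrivial (sub1 w e)" "\<not> htrivial (sub2 w e)" using nu_gen_supp[OF v nz] by blast
  have "cls (sub1 w e) \<in> NT" "cls (sub2 w e) \<in> NT" using cls_NT sub_vstring[OF v] nt by auto
  then show ?thesis using ys by auto
qed

definition S1 :: "('r::comm_ring_1) tensor \<Rightarrow> vword set set" where
  "S1 x = {c. x [c] \<noteq> 0}"

lemma A0_D: "x \<in> tensor_space k \<Longrightarrow> x ys \<noteq> (0::'r::comm_ring_1) \<Longrightarrow> length ys = k \<and> set ys \<subseteq> NT"
  unfolding tensor_space_def by blast

lemma S1_finite: "x \<in> A0 \<Longrightarrow> finite (S1 x)"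
proof -
  assume x: "x \<in> A0"
  have e: "S1 x = (\<lambda>c. [c]) -` {ys. x ys \<noteq> 0}" unfolding S1_def by auto
  have "finite {ys. x ys \<noteq> 0}" using x unfolding tensor_space_def by blast
  then have "finite ((\<lambda>c. [c]) -` {ys. x ys \<noteq> 0})" by (rule finite_vimageI) (auto simp: inj_def)
  then show ?thesis unfolding e .
qed

lemma S1_NT: "x \<in> A0 \<Longrightarrow> c \<in> S1 x \<Longrightarrow> c \<in> NT"
  unfolding S1_def using A0_D by fastforce

lemma nu_cls_NT: "c \<in> NT \<Longrightarrow> \<exists>w. vstring w \<and> \<not> htrivial w \<and> c = cls w \<and> (nu_cls c :: ('r::comm_ring_1) tensor) = nu_gen w"
proof -
  assume "c \<in> NT"
  then obtain w where "vstring w" "\<not> htrivial w" "c = cls w" unfolding NT_def by blast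
  then show ?thesis using nu_cls_cls[of w] by blast
qed

lemma nu_cls_len: "c \<in> NT \<Longrightarrow> length ys \<noteq> 2 \<Longrightarrow> nu_cls c ys = (0::'r::comm_ring_1)"
proof -
  assume "c \<in> NT" "length ys \<noteq> 2"
  then obtain w where "(nu_cls c :: 'r tensor) = nu_gen w" using nu_cls_NT by blast
  then show ?thesis using nu_gen_len \<open>length ys \<noteq> 2\<close> by metis
qed

lemma nu_last_A0:
  assumes x: "x \<in> (A0 :: ('r::comm_ring_1) tensor set)" and C: "finite C" "S1 x \<subseteq> C"
  shows "nu_last x ys = (\<Sum>c\<in>C. x [c] * nu_cls c ys)"
proof (cases "length ys = 2")
  case True
  have "nu_last x ys = (\<Sum>c\<in>{c. x [c] \<noteq> 0}. x [c] * nu_cls c ys)"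
    unfolding nu_last_def using True by simp
  also have "\<dots> = (\<Sum>c\<in>C. x [c] * nu_cls c ys)"
    by (rule sum.mono_neutral_left) (use C in \<open>auto simp: S1_def\<close>)
  finally show ?thesis .
next
  case False
  have "x (take (length ys - 2) ys @ [c]) = 0" if "2 < length ys" for c
    using A0_D[OF x, of "take (length ys - 2) ys @ [c]"] that by auto
  then have "nu_last x ys = 0" unfolding nu_last_def using False by auto
  moreover have "x [c] * nu_cls c ys = 0" if "c \<in> C" for c
  proof (cases "x [c] = 0")
    case False
    then have "c \<in> NT" using S1_NT[OF x] unfolding S1_def by auto
    then have "nu_cls c ys = (0::'r)" using nu_cls_len \<open>length ys \<noteq> 2\<close> by blast
    then show ?thesis by simp
  qed simp
  ultimately show ?thesis by simp
qed


lemma nu_cls_anti: "c \<in> NT \<Longrightarrow> nu_cls c [b, a] = - (nu_cls c [a, b] :: 'r::comm_ring_1)"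
proof -
  assume "c \<in> NT"
  then obtain w where "(nu_cls c :: 'r tensor) = nu_gen w" using nu_cls_NT by blast
  then show ?thesis using nu_gen_anti by metis
qed

lemma gen_A0: assumes v: "vstring a" shows "(gen a :: ('r::comm_ring_1) tensor) \<in> A0"
proof -
  have "{ys. (gen a ys :: 'r) \<noteq> 0} \<subseteq> {[cls a]}" unfolding gen_def by auto
  then have f: "finite {ys. (gen a ys :: 'r) \<noteq> 0}" using finite_subset by blast
  have "length ys = 1 \<and> set ys \<subseteq> NT" if "(gen a ys :: 'r) \<noteq> 0" for ys
  proof -
    have "ys = [cls a]" "\<not> htrivial a" using that unfolding gen_def by (auto split: if_splits)
    then show ?thesis using cls_NT[OF v] by auto
  qed
  then show ?thesis unfolding tensor_space_def using f by blast
qed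

lemma part2: "vstring a \<Longrightarrow> \<not> htrivial a \<Longrightarrow> nu_last (gen a :: ('r::comm_ring_1) tensor) = nu_gen a"
proof
  fix ys assume v: "vstring a" and nt: "\<not> htrivial a"
  have "S1 (gen a :: 'r tensor) \<subseteq> {cls a}" unfolding S1_def gen_def by auto
  then have "nu_last (gen a :: 'r tensor) ys = (\<Sum>c\<in>{cls a}. gen a [c] * nu_cls c ys)"
    using nu_last_A0[OF gen_A0[OF v], of "{cls a}"] by simp
  also have "\<dots> = nu_gen a ys" using nt nu_cls_cls[OF v, where 'r='r] unfolding gen_def by simp
  finally show "nu_last (gen a :: 'r tensor) ys = nu_gen a ys" .
qed

lemma part3: "x \<in> (A0 :: ('r::comm_ring_1) tensor set) \<Longrightarrow> nu_last x \<in> tensor_space 2"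
proof -
  assume x: "x \<in> A0"
  have nl: "nu_last x ys = (\<Sum>c\<in>S1 x. x [c] * nu_cls c ys)" for ys
    using nu_last_A0[OF x S1_finite[OF x]] by simp
  have nz: "\<exists>c\<in>S1 x. nu_cls c ys \<noteq> (0::'r)" if "nu_last x ys \<noteq> 0" for ys
  proof -
    from that obtain c where c: "c \<in> S1 x" "x [c] * nu_cls c ys \<noteq> (0::'r)"
      unfolding nl by (rule sum.not_neutral_contains_not_neutral) blast
    have "nu_cls c ys \<noteq> (0::'r)"
    proof
      assume "nu_cls c ys = (0::'r)"
      then show False using c(2) by simp
    qed
    then show ?thesis using c(1) by blast
  qed
  have "{ys. nu_last x ys \<noteq> 0} \<subseteq> (\<Union>c\<in>S1 x. {ys. nu_cls c ys \<noteq> (0::'r)})" using nz by blast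
  moreover have "finite (\<Union>c\<in>S1 x. {ys. nu_cls c ys \<noteq> (0::'r)})"
  proof (rule finite_UN_I[OF S1_finite[OF x]])
    fix c assume "c \<in> S1 x"
    then obtain w where "vstring w" "(nu_cls c :: 'r tensor) = nu_gen w" using nu_cls_NT S1_NT[OF x] by blast
    then show "finite {ys. nu_cls c ys \<noteq> (0::'r)}" using nu_gen_supp_finite by metis
  qed
  ultimately have f: "finite {ys. nu_last x ys \<noteq> 0}" by (rule finite_subset)
  have "length ys = 2 \<and> set ys \<subseteq> NT" if nz0: "nu_last x ys \<noteq> 0" for ys
  proof -
    obtain c where c: "c \<in> S1 x" "nu_cls c ys \<noteq> (0::'r)" using nz[OF nz0] by blast
    then obtain w where "vstring w" "(nu_cls c :: 'r tensor) = nu_gen w" using nu_cls_NT S1_NT[OF x] by blast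
    then show ?thesis using nu_gen_supp_NT c(2) by metis
  qed
  then show ?thesis using f unfolding tensor_space_def by blast
qed

lemma A0_add: assumes x: "x \<in> (A0 :: ('r::comm_ring_1) tensor set)" and y: "y \<in> A0" shows "(\<lambda>ys. x ys + y ys) \<in> A0"
proof -
  have "{ys. x ys + y ys \<noteq> 0} \<subseteq> {ys. x ys \<noteq> 0} \<union> {ys. y ys \<noteq> 0}" by auto
  moreover have "finite ({ys. x ys \<noteq> 0} \<union> {ys. y ys \<noteq> 0})" using x y unfolding tensor_space_def by blast
  ultimately have f: "finite {ys. x ys + y ys \<noteq> 0}" by (rule finite_subset)
  have "length ys = 1 \<and> set ys \<subseteq> NT" if "x ys + y ys \<noteq> 0" for ys
  proof -
    have "x ys \<noteq> 0 \<or> y ys \<noteq> 0" using that by auto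
    then show ?thesis using A0_D[OF x, of ys] A0_D[OF y, of ys] by blast
  qed
  then show ?thesis unfolding tensor_space_def using f by blast
qed

lemma A0_smult: assumes x: "x \<in> (A0 :: ('r::comm_ring_1) tensor set)" shows "(\<lambda>ys. a * x ys) \<in> A0"
proof -
  have "{ys. a * x ys \<noteq> 0} \<subseteq> {ys. x ys \<noteq> 0}" by auto
  moreover have "finite {ys. x ys \<noteq> 0}" using x unfolding tensor_space_def by blast
  ultimately have f: "finite {ys. a * x ys \<noteq> 0}" by (rule finite_subset)
  have "length ys = 1 \<and> set ys \<subseteq> NT" if "a * x ys \<noteq> 0" for ys
  proof -
    have "x ys \<noteq> 0" using that by auto
    then show ?thesis using A0_D[OF x, of ys] by blast
  qed
  then show ?thesis unfolding tensor_space_def using f by blast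
qed

lemma part4: "x \<in> (A0 :: ('r::comm_ring_1) tensor set) \<Longrightarrow> y \<in> A0 \<Longrightarrow>
   nu_last (\<lambda>ys. x ys + y ys) = (\<lambda>ys. nu_last x ys + nu_last y ys)"
proof
  fix ys assume x: "x \<in> A0" and y: "y \<in> A0"
  let ?C = "S1 x \<union> S1 y"
  have fC: "finite ?C" using S1_finite[OF x] S1_finite[OF y] by simp
  have sub: "S1 (\<lambda>ys. x ys + y ys) \<subseteq> ?C" unfolding S1_def by auto
  have "nu_last (\<lambda>ys. x ys + y ys) ys = (\<Sum>c\<in>?C. (x [c] + y [c]) * nu_cls c ys)"
    using nu_last_A0[OF A0_add[OF x y] fC sub] by simp
  also have "\<dots> = (\<Sum>c\<in>?C. x [c] * nu_cls c ys) + (\<Sum>c\<in>?C. y [c] * nu_cls c ys)"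
    by (simp add: distrib_right sum.distrib)
  also have "\<dots> = nu_last x ys + nu_last y ys"
    using nu_last_A0[OF x fC] nu_last_A0[OF y fC] by simp
  finally show "nu_last (\<lambda>ys. x ys + y ys) ys = nu_last x ys + nu_last y ys" .
qed

lemma part5: "x \<in> (A0 :: ('r::comm_ring_1) tensor set) \<Longrightarrow>
   nu_last (\<lambda>ys. a * x ys) = (\<lambda>ys. a * nu_last x ys)"
proof
  fix ys assume x: "x \<in> A0"
  have fC: "finite (S1 x)" using S1_finite[OF x] .
  have sub: "S1 (\<lambda>ys. a * x ys) \<subseteq> S1 x" unfolding S1_def by auto
  have "nu_last (\<lambda>ys. a * x ys) ys = (\<Sum>c\<in>S1 x. (a * x [c]) * nu_cls c ys)"
    using nu_last_A0[OF A0_smult[OF x] fC sub] by simp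
  also have "\<dots> = a * (\<Sum>c\<in>S1 x. x [c] * nu_cls c ys)"
    by (simp add: sum_distrib_left mult.assoc)
  also have "\<dots> = a * nu_last x ys"
    using nu_last_A0[OF x fC] by simp
  finally show "nu_last (\<lambda>ys. a * x ys) ys = a * nu_last x ys" .
qed

lemma part6: "x \<in> (A0 :: ('r::comm_ring_1) tensor set) \<Longrightarrow> nu_last x [b, a] = - nu_last x [a, b]"
proof -
  assume x: "x \<in> A0"
  have fC: "finite (S1 x)" using S1_finite[OF x] .
  have "nu_last x [b, a] = (\<Sum>c\<in>S1 x. x [c] * nu_cls c [b, a])" using nu_last_A0[OF x fC] by simp
  also have "\<dots> = (\<Sum>c\<in>S1 x. - (x [c] * nu_cls c [a, b]))"
  proof (rule sum.cong)
    fix c assume "c \<in> S1 x"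
    then have "nu_cls c [b, a] = - (nu_cls c [a, b] :: 'r)" using nu_cls_anti S1_NT[OF x] by blast
    then show "x [c] * nu_cls c [b, a] = - (x [c] * nu_cls c [a, b])" by simp
  qed simp
  also have "\<dots> = - nu_last x [a, b]" using nu_last_A0[OF x fC] by (simp add: sum_negf)
  finally show ?thesis .
qed


definition rk :: "vword set \<Rightarrow> nat" where
  "rk c = (LEAST k. \<exists>w. w \<in> c \<and> vstring w \<and> length w = k)"

lemma cls_mem: "w \<in> cls w" unfolding cls_def by (simp add: homotopic_refl)

lemma rk_min: assumes "c \<in> NT" shows "\<exists>w. w \<in> c \<and> vstring w \<and> length w = rk c"
proof -
  obtain a where "vstring a" "c = cls a" using assms unfolding NT_def by blast
  then have "\<exists>k w. w \<in> c \<and> vstring w \<and> length w = k" using cls_mem by blast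
  then show ?thesis unfolding rk_def by (rule LeastI_ex)
qed

lemma rk_le: "w \<in> c \<Longrightarrow> vstring w \<Longrightarrow> rk c \<le> length w"
  unfolding rk_def by (rule Least_le) blast

lemma sub_len: assumes e: "e \<in> arr w" shows "length (sub1 w e) < length w" "length (sub2 w e) < length w"
proof -
  have m: "(e, True) \<in> set w" using e unfolding arr_def by simp
  show "length (sub1 w e) < length w" unfolding sub1_eq
    by (rule length_filter_less[OF m]) (simp add: in1_self)
  show "length (sub2 w e) < length w" unfolding sub2_eq
    by (rule length_filter_less[OF m]) (simp add: in2_self)
qed

lemma nu_cls_rk:
  assumes c: "c \<in> NT" and nz: "nu_cls c [a, b] \<noteq> (0::'r::comm_ring_1)"
  shows "b \<in> NT \<and> rk b < rk c"
proof -
  obtain w0 where w0: "w0 \<in> c" "vstring w0" "length w0 = rk c" using rk_min[OF c] by blast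
  obtain al where al: "vstring al" "c = cls al" using c unfolding NT_def by blast
  have "homotopic al w0" using w0(1) al(2) unfolding cls_def by simp
  then have "(nu_cls c :: 'r tensor) = nu_gen w0" using nu_cls_cls[OF al(1), where 'r='r] nu_gen_hom al(2) by metis
  then have "nu_gen w0 [a, b] \<noteq> (0::'r)" using nz by simp
  from nu_gen_supp[OF w0(2) this] obtain e where e: "e \<in> arr w0"
    and ab: "[a, b] = [cls (sub1 w0 e), cls (sub2 w0 e)] \<or> [a, b] = [cls (sub2 w0 e), cls (sub1 w0 e)]"
    and nt: "\<not> htrivial (sub1 w0 e)" "\<not> htrivial (sub2 w0 e)" by blast
  obtain s where s: "b = cls s" "s = sub1 w0 e \<or> s = sub2 w0 e" using ab by auto
  have vs: "vstring s" "\<not> htrivial s" using s(2) sub_vstring[OF w0(2)] nt by auto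
  have "rk b \<le> length s" using rk_le[OF cls_mem vs(1)] s(1) by simp
  also have "\<dots> < length w0" using s(2) sub_len[OF e] by auto
  finally show ?thesis using w0(3) cls_NT[OF vs] s(1) by simp
qed

definition Pspi :: "nat \<Rightarrow> ('r::comm_ring_1) tensor \<Rightarrow> bool" where
  "Pspi N f \<longleftrightarrow> (\<forall>ys. f ys \<noteq> 0 \<longrightarrow> ys \<noteq> [] \<and> last ys \<in> NT \<and> rk (last ys) < N)"

lemma spi_step: assumes P: "Pspi (Suc N) (f :: ('r::comm_ring_1) tensor)" shows "Pspi N (nu_last f)"
  unfolding Pspi_def
proof (intro allI impI)
  fix ys assume nz: "nu_last f ys \<noteq> 0"
  have len: "2 \<le> length ys" using nz unfolding nu_last_def by (auto split: if_splits)
  let ?p = "take (length ys - 2) ys" and ?d = "drop (length ys - 2) ys"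
  have "(\<Sum>c\<in>{c. f (?p @ [c]) \<noteq> 0}. f (?p @ [c]) * nu_cls c ?d) \<noteq> 0" using nz len unfolding nu_last_def by simp
  then obtain c where c: "c \<in> {c. f (?p @ [c]) \<noteq> 0}" "f (?p @ [c]) * nu_cls c ?d \<noteq> (0::'r)"
    by (rule sum.not_neutral_contains_not_neutral) blast
  have fc: "f (?p @ [c]) \<noteq> 0" using c(1) by simp
  have nc: "nu_cls c ?d \<noteq> (0::'r)"
  proof
    assume "nu_cls c ?d = (0::'r)" then show False using c(2) by simp
  qed
  have cNT: "c \<in> NT" "rk c < Suc N" using P fc unfolding Pspi_def by auto
  have dl: "length ?d = 2" using len by simp
  then obtain a b where ab: "?d = [a, b]"
    by (metis (no_types, lifting) One_nat_def Suc_1 length_0_conv length_Suc_conv)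
  have lst: "last ys = b"
  proof -
    have "ys = ?p @ ?d" by simp
    then show ?thesis using ab by (metis last.simps last_appendR list.distinct(1))
  qed
  have "b \<in> NT \<and> rk b < rk c" using nu_cls_rk[OF cNT(1)] nc ab by metis
  then show "ys \<noteq> [] \<and> last ys \<in> NT \<and> rk (last ys) < N" using lst cNT(2) len by auto
qed

lemma spi_zero: "Pspi N (f :: ('r::comm_ring_1) tensor) \<Longrightarrow> (nu_last ^^ N) f = (\<lambda>_. 0)"
proof (induction N arbitrary: f)
  case 0
  then show ?case unfolding Pspi_def by auto
next
  case (Suc N)
  have "(nu_last ^^ Suc N) f = (nu_last ^^ N) (nu_last f)" by (simp only: funpow_Suc_right comp_apply)
  then show ?case using Suc.IH[OF spi_step[OF Suc.prems]] by simp
qed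

lemma part8: "x \<in> (A0 :: ('r::comm_ring_1) tensor set) \<Longrightarrow> \<exists>n\<ge>1. nu_pow n x = (\<lambda>_. 0)"
proof -
  assume x: "x \<in> A0"
  define N where "N = Suc (Max (rk ` S1 x))"
  have "Pspi N x" unfolding Pspi_def
  proof (intro allI impI)
    fix ys assume nz: "x ys \<noteq> 0"
    then have l: "length ys = 1" "set ys \<subseteq> NT" using A0_D[OF x] by blast+
    then obtain c where ys: "ys = [c]" by (metis One_nat_def length_0_conv length_Suc_conv)
    have cS: "c \<in> S1 x" using nz ys unfolding S1_def by simp
    have "rk c \<le> Max (rk ` S1 x)" using cS S1_finite[OF x] by simp
    then show "ys \<noteq> [] \<and> last ys \<in> NT \<and> rk (last ys) < N" using ys l unfolding N_def by auto
  qed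
  then have "nu_pow N x = (\<lambda>_. 0)" unfolding nu_pow_def by (rule spi_zero)
  moreover have "N \<ge> 1" unfolding N_def by simp
  ultimately show ?thesis by blast
qed


lemma noncross_sym: "p \<noteq> q \<Longrightarrow> r \<noteq> s \<Longrightarrow> in_arc p q r \<Longrightarrow> in_arc p q s \<Longrightarrow>
  (in_arc r s p \<and> in_arc r s q) \<or> (in_arc s r p \<and> in_arc s r q)"
  unfolding in_arc_def by (auto split: if_splits)

lemma contain: "p \<noteq> q \<Longrightarrow> r \<noteq> s \<Longrightarrow> in_arc p q r \<Longrightarrow> in_arc p q s \<Longrightarrow> in_arc r s p \<Longrightarrow> in_arc r s q \<Longrightarrow>
  in_arc s r k \<Longrightarrow> in_arc p q k"
  unfolding in_arc_def by (auto split: if_splits)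

definition inj' :: "vword \<Rightarrow> bool \<Rightarrow> nat \<Rightarrow> nat \<Rightarrow> bool" where
  "inj' w j e h = (if j then in1 w e h else in2 w e h)"

definition subj :: "vword \<Rightarrow> bool \<Rightarrow> nat \<Rightarrow> vword" where
  "subj w j e = (if j then sub1 w e else sub2 w e)"

lemma subj_eq: "subj w j e = filter (\<lambda>(h, b). inj' w j e h) w"
  unfolding subj_def inj'_def sub1_eq sub2_eq by simp

definition arcp :: "vword \<Rightarrow> bool \<Rightarrow> nat \<Rightarrow> nat \<times> nat" where
  "arcp w j e = (if j then (pos w (e, True), pos w (e, False)) else (pos w (e, False), pos w (e, True)))"

lemma inj'_arc: "inj' w j e h = (in_arc (fst (arcp w j e)) (snd (arcp w j e)) (pos w (h, True)) \<and>
    in_arc (fst (arcp w j e)) (snd (arcp w j e)) (pos w (h, False)))"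
  unfolding inj'_def arcp_def in1_def in2_def btw_def by simp

lemma arr_letters: "vstring w \<Longrightarrow> e \<in> arr w \<Longrightarrow> (e, True) \<in> set w \<and> (e, False) \<in> set w"
  unfolding arr_def using vstring_partner' by blast

lemma arcp_ne: assumes v: "vstring w" and e: "e \<in> arr w" shows "fst (arcp w j e) \<noteq> snd (arcp w j e)"
proof -
  have d: "distinct w" using v vstring_distinct by blast
  have "pos w (e, True) \<noteq> pos w (e, False)" using pos_inj[OF d] arr_letters[OF v e] by blast
  then show ?thesis unfolding arcp_def by auto
qed

lemma arcp_swap: "arcp w (\<not> j) e = (snd (arcp w j e), fst (arcp w j e))"
  unfolding arcp_def by auto

lemma arcp_set: "{fst (arcp w j e), snd (arcp w j e)} = {pos w (e, True), pos w (e, False)}"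
  unfolding arcp_def by auto

lemma G_sym:
  assumes v: "vstring w" and e: "e \<in> arr w" and f: "f \<in> arr w" and j: "inj' w j e f"
  shows "inj' w True f e \<or> inj' w False f e"
proof -
  obtain p q where pq: "arcp w j e = (p, q)" by (cases "arcp w j e")
  have pqn: "p \<noteq> q" using arcp_ne[OF v e, of j] pq by simp
  have rs: "pos w (f, True) \<noteq> pos w (f, False)" using arcp_ne[OF v f, of True] unfolding arcp_def by simp
  have "in_arc p q (pos w (f, True))" "in_arc p q (pos w (f, False))" using j pq unfolding inj'_arc by auto
  from noncross_sym[OF pqn rs this]
  have "(in_arc (pos w (f, True)) (pos w (f, False)) p \<and> in_arc (pos w (f, True)) (pos w (f, False)) q) \<or>
        (in_arc (pos w (f, False)) (pos w (f, True)) p \<and> in_arc (pos w (f, False)) (pos w (f, True)) q)" .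
  moreover have "{p, q} = {pos w (e, True), pos w (e, False)}" using arcp_set[of w j e] pq by simp
  ultimately show ?thesis unfolding inj'_arc arcp_def by (auto simp: doubleton_eq_iff)
qed

lemma not_both: assumes v: "vstring w" and e: "e \<in> arr w" shows "\<not> (inj' w j e h \<and> inj' w (\<not> j) e h)"
proof -
  obtain p q where pq: "arcp w j e = (p, q)" by (cases "arcp w j e")
  have pqn: "p \<noteq> q" using arcp_ne[OF v e, of j] pq by simp
  have "\<not> (in_arc p q k \<and> in_arc q p k)" for k using pqn unfolding in_arc_def by auto
  then show ?thesis unfolding inj'_arc arcp_swap pq by auto
qed

lemma G_cont:
  assumes v: "vstring w" and e: "e \<in> arr w" and f: "f \<in> arr w"
    and j: "inj' w j e f" and k: "inj' w k f e" and h: "inj' w (\<not> k) f h"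
  shows "inj' w j e h"
proof -
  obtain p q where pq: "arcp w j e = (p, q)" by (cases "arcp w j e")
  obtain r s where rs: "arcp w k f = (r, s)" by (cases "arcp w k f")
  have pqn: "p \<noteq> q" using arcp_ne[OF v e, of j] pq by simp
  have rsn: "r \<noteq> s" using arcp_ne[OF v f, of k] rs by simp
  have a: "in_arc p q r" "in_arc p q s"
  proof -
    have "{r, s} = {pos w (f, True), pos w (f, False)}" using arcp_set[of w k f] rs by simp
    moreover have "in_arc p q (pos w (f, True))" "in_arc p q (pos w (f, False))" using j pq unfolding inj'_arc by auto
    ultimately show "in_arc p q r" "in_arc p q s" by (auto simp: doubleton_eq_iff)
  qed
  have b: "in_arc r s p" "in_arc r s q"
  proof -
    have "{p, q} = {pos w (e, True), pos w (e, False)}" using arcp_set[of w j e] pq by simp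
    moreover have "in_arc r s (pos w (e, True))" "in_arc r s (pos w (e, False))" using k rs unfolding inj'_arc by auto
    ultimately show "in_arc r s p" "in_arc r s q" by (auto simp: doubleton_eq_iff)
  qed
  have "in_arc s r (pos w (h, True))" "in_arc s r (pos w (h, False))"
    using h rs unfolding inj'_arc arcp_swap by auto
  then show ?thesis using contain[OF pqn rsn a b] pq unfolding inj'_arc by auto
qed

lemma inj'_filter:
  assumes v: "vstring w" and fv: "(f, True) \<in> set (filter P w)" "(f, False) \<in> set (filter P w)"
    and hv: "(h, True) \<in> set (filter P w)" "(h, False) \<in> set (filter P w)"
  shows "inj' (filter P w) i f h = inj' w i f h"
proof -
  have d: "distinct w" using v vstring_distinct by blast
  show ?thesis unfolding inj'_def in1_def in2_def using btw_filter[OF d] fv hv by simp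
qed

lemma subsub:
  assumes v: "vstring w" and f: "f \<in> arr w" and j: "inj' w j e f"
  shows "subj (subj w j e) i f = filter (\<lambda>(h, b). inj' w j e h \<and> inj' w i f h) w"
proof -
  let ?P = "\<lambda>(h, b). inj' w j e h"
  have "subj (subj w j e) i f = filter (\<lambda>(h, b). inj' (filter ?P w) i f h) (filter ?P w)"
    by (simp only: subj_eq)
  also have "\<dots> = filter (\<lambda>x. ?P x \<and> (case x of (h, b) \<Rightarrow> inj' (filter ?P w) i f h)) w"
    by (simp add: filter_filter conj_commute)
  also have "\<dots> = filter (\<lambda>(h, b). inj' w j e h \<and> inj' w i f h) w"
  proof (rule filter_cong)
    fix z assume z: "z \<in> set w"
    obtain h b where zh: "z = (h, b)" by (cases z)
    have fl: "(f, True) \<in> set (filter ?P w)" "(f, False) \<in> set (filter ?P w)"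
      using arr_letters[OF v f] j by auto
    have "inj' (filter ?P w) i f h = inj' w i f h" if "inj' w j e h"
    proof -
      have "(h, True) \<in> set w" "(h, False) \<in> set w" using vstring_partner'[OF v] z zh by blast+
      then have "(h, True) \<in> set (filter ?P w)" "(h, False) \<in> set (filter ?P w)" using that by auto
      then show ?thesis using inj'_filter[OF v fl] by blast
    qed
    then show "(?P z \<and> (case z of (h, b) \<Rightarrow> inj' (filter ?P w) i f h)) = (case z of (h, b) \<Rightarrow> inj' w j e h \<and> inj' w i f h)"
      using zh by auto
  qed simp
  finally show ?thesis .
qed

lemma arr_subj: "arr (subj w j e) = {f \<in> arr w. inj' w j e f}"
  unfolding arr_def subj_eq by auto


definition sg :: "bool \<Rightarrow> 'r::comm_ring_1" where "sg j = (if j then -1 else 1)"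

definition tmj :: "vword \<Rightarrow> bool \<Rightarrow> nat \<Rightarrow> nat \<Rightarrow> vword set \<Rightarrow> vword set \<Rightarrow> vword set \<Rightarrow> 'r::comm_ring_1" where
  "tmj w j e f a b c = sg j * ind (subj w (\<not> j) e) a *
     (ind (subj (subj w j e) True f) b * ind (subj (subj w j e) False f) c -
      ind (subj (subj w j e) False f) b * ind (subj (subj w j e) True f) c)"

definition tm :: "vword \<Rightarrow> nat \<Rightarrow> nat \<Rightarrow> vword set \<Rightarrow> vword set \<Rightarrow> vword set \<Rightarrow> 'r::comm_ring_1" where
  "tm w e f a b c = (if inj' w False e f then tmj w False e f a b c else 0) + (if inj' w True e f then tmj w True e f a b c else 0)"

definition Z :: "vword \<Rightarrow> vword set \<Rightarrow> vword set \<Rightarrow> vword set \<Rightarrow> 'r::comm_ring_1" where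
  "Z w a b c = (\<Sum>e\<in>arr w. ind (sub1 w e) a * nu_gen (sub2 w e) [b, c] - ind (sub2 w e) a * nu_gen (sub1 w e) [b, c])"

lemma nu_gen_subj: "(nu_gen (subj w j e) [b, c] :: 'r::comm_ring_1) =
   (\<Sum>f\<in>arr w. if inj' w j e f then ind (subj (subj w j e) True f) b * ind (subj (subj w j e) False f) c -
      ind (subj (subj w j e) False f) b * ind (subj (subj w j e) True f) c else 0)"
proof -
  have "(nu_gen (subj w j e) [b, c] :: 'r) = (\<Sum>f\<in>arr (subj w j e). ind (subj (subj w j e) True f) b * ind (subj (subj w j e) False f) c -
      ind (subj (subj w j e) False f) b * ind (subj (subj w j e) True f) c)"
    unfolding nu_gen_2 subj_def by simp
  also have "\<dots> = (\<Sum>f\<in>arr w. if inj' w j e f then ind (subj (subj w j e) True f) b * ind (subj (subj w j e) False f) c -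
      ind (subj (subj w j e) False f) b * ind (subj (subj w j e) True f) c else 0)"
    unfolding arr_subj by (simp add: sum.inter_filter[OF finite_arr])
  finally show ?thesis .
qed

lemma Z_tm: "(Z w a b c :: 'r::comm_ring_1) = (\<Sum>e\<in>arr w. \<Sum>f\<in>arr w. tm w e f a b c)"
proof -
  have "(ind (sub1 w e) a * nu_gen (sub2 w e) [b, c] - ind (sub2 w e) a * nu_gen (sub1 w e) [b, c] :: 'r) =
      (\<Sum>f\<in>arr w. tm w e f a b c)" for e
  proof -
    have s2: "sub2 w e = subj w False e" "sub1 w e = subj w True e" unfolding subj_def by simp_all
    have pw: "ind (subj w True e) a * (if inj' w False e f then ind (subj (subj w False e) True f) b * ind (subj (subj w False e) False f) c -
      ind (subj (subj w False e) False f) b * ind (subj (subj w False e) True f) c else 0) -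
      ind (subj w False e) a * (if inj' w True e f then ind (subj (subj w True e) True f) b * ind (subj (subj w True e) False f) c -
      ind (subj (subj w True e) False f) b * ind (subj (subj w True e) True f) c else 0) = (tm w e f a b c :: 'r)" for f
      unfolding tm_def tmj_def sg_def by simp
    show ?thesis unfolding s2 nu_gen_subj sum_distrib_left sum_subtractf[symmetric] pw ..
  qed
  then show ?thesis unfolding Z_def by simp
qed

lemma inj'_self: "\<not> inj' w j e e"
  unfolding inj'_def using in1_self in2_self by auto

lemma tm_self: "tm w e e a b c = 0"
  unfolding tm_def using inj'_self by simp

lemma term_conf:
  assumes v: "vstring w" and e: "e \<in> arr w" and f: "f \<in> arr w"
    and j: "inj' w j e f" and k: "inj' w k f e"
  shows "(tm w e f a b c :: 'r::comm_ring_1) = sg j * sg k * ind (subj w (\<not> j) e) a *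
     (ind (subj w (\<not> k) f) b * ind (filter (\<lambda>(h, b). inj' w j e h \<and> inj' w k f h) w) c -
      ind (filter (\<lambda>(h, b). inj' w j e h \<and> inj' w k f h) w) b * ind (subj w (\<not> k) f) c)"
proof -
  let ?Q = "filter (\<lambda>(h, b). inj' w j e h \<and> inj' w k f h) w"
  have nj: "\<not> inj' w (\<not> j) e f" using not_both[OF v e, of j f] j by blast
  have tmj: "(tm w e f a b c :: 'r) = tmj w j e f a b c"
    unfolding tm_def using j nj by (cases j) auto
  have sS: "subj (subj w j e) (\<not> k) f = subj w (\<not> k) f"
  proof -
    have "subj (subj w j e) (\<not> k) f = filter (\<lambda>(h, b). inj' w j e h \<and> inj' w (\<not> k) f h) w"
      by (rule subsub[OF v f j])
    also have "\<dots> = filter (\<lambda>(h, b). inj' w (\<not> k) f h) w"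
      by (rule filter_cong) (use G_cont[OF v e f j k] in auto)
    finally show ?thesis unfolding subj_eq .
  qed
  have sQ: "subj (subj w j e) k f = ?Q" by (rule subsub[OF v f j])
  show ?thesis
  proof (cases k)
    case True
    then have "subj (subj w j e) True f = ?Q" "subj (subj w j e) False f = subj w (\<not> k) f" using sQ sS by simp_all
    then show ?thesis unfolding tmj tmj_def using True by (simp add: sg_def algebra_simps)
  next
    case False
    then have "subj (subj w j e) False f = ?Q" "subj (subj w j e) True f = subj w (\<not> k) f" using sQ sS by simp_all
    then show ?thesis unfolding tmj tmj_def using False by (simp add: sg_def algebra_simps)
  qed
qed

definition Kc :: "vword \<Rightarrow> nat \<Rightarrow> nat \<Rightarrow> vword set \<Rightarrow> vword set \<Rightarrow> vword set \<Rightarrow> 'r::comm_ring_1" where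
  "Kc w e f a b c = tm w e f a b c + tm w e f b c a + tm w e f c a b"

lemma tm_zero: "\<not> inj' w True e f \<Longrightarrow> \<not> inj' w False e f \<Longrightarrow> tm w e f a b c = 0"
  unfolding tm_def by simp

lemma ring6: "(t::'r::comm_ring_1) * Sa * (Pb * Qc - Qb * Pc) + t * Sb * (Pc * Qa - Qc * Pa) + t * Sc * (Pa * Qb - Qa * Pb) =
  - (t * Pa * (Sb * Qc - Qb * Sc) + t * Pb * (Sc * Qa - Qc * Sa) + t * Pc * (Sa * Qb - Qa * Sb))"
  by (simp add: algebra_simps)

lemma Kc_anti:
  assumes v: "vstring w" and e: "e \<in> arr w" and f: "f \<in> arr w"
  shows "(Kc w f e a b c :: 'r::comm_ring_1) = - Kc w e f a b c"
proof (cases "\<exists>j. inj' w j e f")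
  case True
  then obtain j where j: "inj' w j e f" by blast
  obtain k where k: "inj' w k f e" using G_sym[OF v e f j] by blast
  let ?Q = "filter (\<lambda>(h, b). inj' w j e h \<and> inj' w k f h) w"
  have Q': "filter (\<lambda>(h, b). inj' w k f h \<and> inj' w j e h) w = ?Q"
    by (rule filter_cong) auto
  let ?P = "subj w (\<not> j) e" and ?S = "subj w (\<not> k) f"
  have t1: "(tm w e f x y z :: 'r) = sg j * sg k * ind ?P x * (ind ?S y * ind ?Q z - ind ?Q y * ind ?S z)" for x y z
    by (rule term_conf[OF v e f j k])
  have t2: "(tm w f e x y z :: 'r) = sg k * sg j * ind ?S x * (ind ?P y * ind ?Q z - ind ?Q y * ind ?P z)" for x y z
    using term_conf[OF v f e k j, of x y z] unfolding Q' .
  have c: "sg k * sg j = (sg j * sg k :: 'r)" by (simp add: mult.commute)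
  show ?thesis unfolding Kc_def t1 t2 c by (rule ring6)
next
  case False
  then have n1: "\<not> inj' w True e f" "\<not> inj' w False e f" by auto
  have n2: "\<not> inj' w True f e" "\<not> inj' w False f e"
    using G_sym[OF v f e, of True] G_sym[OF v f e, of False] False by auto
  show ?thesis unfolding Kc_def using tm_zero[OF n1, where 'a='r] tm_zero[OF n2, where 'a='r] by simp
qed

lemma antisym_sum:
  assumes "finite A" and diag: "\<And>x. x \<in> A \<Longrightarrow> K x x = (0::'r::comm_ring_1)"
    and anti: "\<And>x y. x \<in> A \<Longrightarrow> y \<in> A \<Longrightarrow> K y x = - K x y"
  shows "(\<Sum>x\<in>A. \<Sum>y\<in>A. K x y) = 0"
  using assms
proof (induction A rule: finite_induct)
  case empty show ?case by simp
next
  case (insert a A)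
  have IH: "(\<Sum>x\<in>A. \<Sum>y\<in>A. K x y) = 0"
  proof (rule insert.IH)
    show "\<And>x. x \<in> A \<Longrightarrow> K x x = 0" using insert(4) by blast
    show "\<And>x y. x \<in> A \<Longrightarrow> y \<in> A \<Longrightarrow> K y x = - K x y" using insert(5) by blast
  qed
  have e1: "(\<Sum>x\<in>insert a A. \<Sum>y\<in>insert a A. K x y) =
     (K a a + (\<Sum>y\<in>A. K a y)) + (\<Sum>x\<in>A. K x a + (\<Sum>y\<in>A. K x y))"
    using insert(1,2) by (simp add: sum.insert add.assoc)
  have e2: "(\<Sum>x\<in>A. K x a + (\<Sum>y\<in>A. K x y)) = (\<Sum>x\<in>A. K x a) + (\<Sum>x\<in>A. \<Sum>y\<in>A. K x y)"
    by (rule sum.distrib)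
  have e3: "(\<Sum>x\<in>A. K x a) = (\<Sum>y\<in>A. - K a y)"
  proof (rule sum.cong)
    fix x assume "x \<in> A"
    then show "K x a = - K a x" using insert(5)[of a x] by blast
  qed simp
  have e4: "(\<Sum>y\<in>A. - K a y) = - (\<Sum>y\<in>A. K a y)" by (rule sum_negf)
  have e5: "K a a = 0" using insert(4)[of a] by blast
  show ?case unfolding e1 e2 e3 e4 e5 IH by simp
qed

lemma Z_cyclic:
  assumes v: "vstring w"
  shows "(Z w a b c + Z w b c a + Z w c a b :: 'r::comm_ring_1) = 0"
proof -
  have "(Z w a b c + Z w b c a + Z w c a b :: 'r) = (\<Sum>e\<in>arr w. \<Sum>f\<in>arr w. Kc w e f a b c)"
    unfolding Z_tm Kc_def by (simp add: sum.distrib)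
  also have "\<dots> = 0"
  proof (rule antisym_sum[OF finite_arr])
    show "\<And>x. x \<in> arr w \<Longrightarrow> (Kc w x x a b c :: 'r) = 0" unfolding Kc_def by (simp add: tm_self)
    show "\<And>x y. x \<in> arr w \<Longrightarrow> y \<in> arr w \<Longrightarrow> (Kc w y x a b c :: 'r) = - Kc w x y a b c"
      using Kc_anti[OF v] by blast
  qed
  finally show ?thesis .
qed


lemma htriv_nu: "htrivial s \<Longrightarrow> (nu_gen s :: ('r::comm_ring_1) tensor) = (\<lambda>_. 0)"
proof -
  assume "htrivial s"
  then have "(nu_gen s :: 'r tensor) = nu_gen []" unfolding htrivial_def by (rule nu_gen_hom)
  also have "\<dots> = (\<lambda>_. 0)" unfolding nu_gen_def arr_def by simp
  finally show ?thesis .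
qed

lemma ind_sum:
  assumes D: "finite D" "cls s \<in> D" and v: "vstring s"
  shows "(\<Sum>d\<in>D. ind s d * nu_cls d [b, c]) = (nu_gen s [b, c] :: 'r::comm_ring_1)"
proof -
  have "(\<Sum>d\<in>D. ind s d * nu_cls d [b, c]) = (\<Sum>d\<in>D. if d = cls s then (if htrivial s then 0 else nu_cls d [b, c]) else (0::'r))"
    by (rule sum.cong) (auto simp: ind_def)
  also have "\<dots> = (if htrivial s then 0 else nu_cls (cls s) [b, c])"
    using D by (simp add: sum.delta)
  also have "\<dots> = nu_gen s [b, c]"
    using htriv_nu[of s, where 'r='r] nu_cls_cls[OF v, where 'r='r] by auto
  finally show ?thesis .
qed

lemma sumD:
  assumes v: "vstring w" and D: "finite D" and DD: "\<And>e. e \<in> arr w \<Longrightarrow> cls (sub1 w e) \<in> D \<and> cls (sub2 w e) \<in> D"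
  shows "(\<Sum>d\<in>D. nu_gen w [a, d] * nu_cls d [b, c]) = (Z w a b c :: 'r::comm_ring_1)"
proof -
  have "(\<Sum>d\<in>D. nu_gen w [a, d] * nu_cls d [b, c]) =
     (\<Sum>d\<in>D. \<Sum>e\<in>arr w. (ind (sub1 w e) a * ind (sub2 w e) d - ind (sub2 w e) a * ind (sub1 w e) d) * (nu_cls d [b, c] :: 'r))"
    unfolding nu_gen_2 by (simp add: sum_distrib_right)
  also have "\<dots> = (\<Sum>e\<in>arr w. \<Sum>d\<in>D. (ind (sub1 w e) a * ind (sub2 w e) d - ind (sub2 w e) a * ind (sub1 w e) d) * (nu_cls d [b, c] :: 'r))"
    by (rule sum.swap)
  also have "\<dots> = (\<Sum>e\<in>arr w. ind (sub1 w e) a * (\<Sum>d\<in>D. ind (sub2 w e) d * nu_cls d [b, c]) -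
      ind (sub2 w e) a * (\<Sum>d\<in>D. ind (sub1 w e) d * (nu_cls d [b, c] :: 'r)))"
    by (simp add: sum_distrib_left sum_subtractf[symmetric] algebra_simps)
  also have "\<dots> = Z w a b c"
    unfolding Z_def
  proof (rule sum.cong)
    fix e assume e: "e \<in> arr w"
    have "(\<Sum>d\<in>D. ind (sub2 w e) d * nu_cls d [b, c]) = (nu_gen (sub2 w e) [b, c] :: 'r)"
      using ind_sum[OF D(1)] DD[OF e] sub_vstring[OF v] by blast
    moreover have "(\<Sum>d\<in>D. ind (sub1 w e) d * nu_cls d [b, c]) = (nu_gen (sub1 w e) [b, c] :: 'r)"
      using ind_sum[OF D(1)] DD[OF e] sub_vstring[OF v] by blast
    ultimately show "ind (sub1 w e) a * (\<Sum>d\<in>D. ind (sub2 w e) d * nu_cls d [b, c]) -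
      ind (sub2 w e) a * (\<Sum>d\<in>D. ind (sub1 w e) d * (nu_cls d [b, c] :: 'r)) =
      ind (sub1 w e) a * nu_gen (sub2 w e) [b, c] - ind (sub2 w e) a * nu_gen (sub1 w e) [b, c]" by simp
  qed simp
  finally show ?thesis .
qed

definition repr :: "vword set \<Rightarrow> vword" where "repr c = (SOME w. w \<in> c \<and> vstring w)"

lemma nu_cls_repr: "nu_cls c = nu_gen (repr c)" unfolding nu_cls_def repr_def ..

lemma repr_v: "c \<in> NT \<Longrightarrow> vstring (repr c)"
proof -
  assume "c \<in> NT"
  then obtain a where "vstring a" "c = cls a" unfolding NT_def by blast
  then have "\<exists>w. w \<in> c \<and> vstring w" using cls_mem by blast
  then show ?thesis unfolding repr_def using someI_ex by (metis (mono_tags, lifting))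
qed

definition Dw :: "vword \<Rightarrow> vword set set" where
  "Dw w = (\<lambda>e. cls (sub1 w e)) ` arr w \<union> (\<lambda>e. cls (sub2 w e)) ` arr w"

lemma Dw_finite: "finite (Dw w)" unfolding Dw_def using finite_arr by simp

lemma part7:
  assumes x: "x \<in> (A0 :: ('r::comm_ring_1) tensor set)"
  shows "nu_last (nu_last x) [a, b, c] + nu_last (nu_last x) [b, c, a] + nu_last (nu_last x) [c, a, b] = 0"
proof -
  let ?y = "nu_last x"
  have fS: "finite (S1 x)" using S1_finite[OF x] .
  have y: "?y ys = (\<Sum>c'\<in>S1 x. x [c'] * nu_gen (repr c') ys)" for ys
    using nu_last_A0[OF x fS] unfolding nu_cls_repr by simp
  define D where "D = (\<Union>c'\<in>S1 x. Dw (repr c'))"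
  have fD: "finite D" unfolding D_def using fS Dw_finite by blast
  have DD: "cls (sub1 (repr c') e) \<in> D \<and> cls (sub2 (repr c') e) \<in> D" if "c' \<in> S1 x" "e \<in> arr (repr c')" for c' e
    using that unfolding D_def Dw_def by blast
  have main: "nu_last ?y [p, q, r] = (\<Sum>c'\<in>S1 x. x [c'] * Z (repr c') p q r)" for p q r
  proof -
    have sub: "{d. ?y [p, d] \<noteq> 0} \<subseteq> D"
    proof
      fix d assume "d \<in> {d. ?y [p, d] \<noteq> 0}"
      then have "(\<Sum>c'\<in>S1 x. x [c'] * nu_gen (repr c') [p, d]) \<noteq> 0" using y by simp
      then obtain c' where c': "c' \<in> S1 x" "x [c'] * nu_gen (repr c') [p, d] \<noteq> (0::'r)"
        by (rule sum.not_neutral_contains_not_neutral) blast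
      have "nu_gen (repr c') [p, d] \<noteq> (0::'r)"
      proof
        assume "nu_gen (repr c') [p, d] = (0::'r)" then show False using c'(2) by simp
      qed
      from nu_gen_supp[OF repr_v[OF S1_NT[OF x c'(1)]] this] obtain e where
        "e \<in> arr (repr c')" "[p, d] = [cls (sub1 (repr c') e), cls (sub2 (repr c') e)] \<or> [p, d] = [cls (sub2 (repr c') e), cls (sub1 (repr c') e)]"
        by blast
      then show "d \<in> D" using DD[OF c'(1)] by auto
    qed
    have "nu_last ?y [p, q, r] = (\<Sum>d\<in>{d. ?y [p, d] \<noteq> 0}. ?y [p, d] * nu_cls d [q, r])"
      unfolding nu_last_def by simp
    also have "\<dots> = (\<Sum>d\<in>D. ?y [p, d] * nu_cls d [q, r])"
      by (rule sum.mono_neutral_left[OF fD sub]) auto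
    also have "\<dots> = (\<Sum>d\<in>D. \<Sum>c'\<in>S1 x. x [c'] * (nu_gen (repr c') [p, d] * nu_cls d [q, r]))"
      unfolding y by (simp add: sum_distrib_right mult.assoc)
    also have "\<dots> = (\<Sum>c'\<in>S1 x. x [c'] * (\<Sum>d\<in>D. nu_gen (repr c') [p, d] * nu_cls d [q, r]))"
      by (subst sum.swap) (simp add: sum_distrib_left)
    also have "\<dots> = (\<Sum>c'\<in>S1 x. x [c'] * Z (repr c') p q r)"
    proof (rule sum.cong)
      fix c' assume c': "c' \<in> S1 x"
      show "x [c'] * (\<Sum>d\<in>D. nu_gen (repr c') [p, d] * nu_cls d [q, r]) = x [c'] * Z (repr c') p q r"
        using sumD[OF repr_v[OF S1_NT[OF x c']] fD DD[OF c'], where 'r='r] by simp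
    qed simp
    finally show ?thesis .
  qed
  have "nu_last ?y [a, b, c] + nu_last ?y [b, c, a] + nu_last ?y [c, a, b] =
     (\<Sum>c'\<in>S1 x. x [c'] * (Z (repr c') a b c + Z (repr c') b c a + Z (repr c') c a b))"
    unfolding main by (simp add: sum.distrib distrib_left)
  also have "\<dots> = 0"
    using Z_cyclic[OF repr_v[OF S1_NT[OF x]], where 'r='r] by simp
  finally show ?thesis .
qed


theorem lemma9p1:
  shows
    \<comment> \<open>well-definedness: the formula only depends on the homotopy class\<close>
    "(\<forall>\<alpha> \<beta>. vstring \<alpha> \<and> vstring \<beta> \<and> \<not> htrivial \<alpha> \<and> homotopic \<alpha> \<beta> \<longrightarrow>
        (nu_gen \<alpha> :: ('r::comm_ring_1) tensor) = nu_gen \<beta>)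
   \<and> \<comment> \<open>nu is given on generators by the formula\<close>
     (\<forall>\<alpha>. vstring \<alpha> \<and> \<not> htrivial \<alpha> \<longrightarrow> nu_last (gen \<alpha> :: 'r tensor) = nu_gen \<alpha>)
   \<and> \<comment> \<open>nu is an R-linear map A_0 \<rightarrow> A_0 \<otimes> A_0\<close>
     (\<forall>x \<in> (A0 :: 'r tensor set). nu_last x \<in> tensor_space 2)
   \<and> (\<forall>x \<in> (A0 :: 'r tensor set). \<forall>y \<in> A0. nu_last (\<lambda>ys. x ys + y ys) = (\<lambda>ys. nu_last x ys + nu_last y ys))
   \<and> (\<forall>x \<in> (A0 :: 'r tensor set). \<forall>a. nu_last (\<lambda>ys. a * x ys) = (\<lambda>ys. a * nu_last x ys))
   \<and> \<comment> \<open>antisymmetry  P \<circ> nu = - nu\<close>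
     (\<forall>x \<in> (A0 :: 'r tensor set). \<forall>a b. nu_last x [b, a] = - nu_last x [a, b])
   \<and> \<comment> \<open>co-Jacobi identity  (id + \<tau> + \<tau>^2) \<circ> (id \<otimes> nu) \<circ> nu = 0\<close>
     (\<forall>x \<in> (A0 :: 'r tensor set). \<forall>a b c.
        nu_last (nu_last x) [a, b, c] + nu_last (nu_last x) [b, c, a]
          + nu_last (nu_last x) [c, a, b] = 0)
   \<and> \<comment> \<open>spiral: A_0 is free (by construction) and A_0 is the union of the ker nu^(n)\<close>
     (\<forall>x \<in> (A0 :: 'r tensor set). \<exists>n\<ge>1. nu_pow n x = (\<lambda>_. 0))"
proof -
  have h1: "\<forall>\<alpha> \<beta>. vstring \<alpha> \<and> vstring \<beta> \<and> \<not> htrivial \<alpha> \<and> homotopic \<alpha> \<beta> \<longrightarrow>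
        (nu_gen \<alpha> :: ('r::comm_ring_1) tensor) = nu_gen \<beta>"
    using nu_gen_hom by blast
  have h2: "\<forall>\<alpha>. vstring \<alpha> \<and> \<not> htrivial \<alpha> \<longrightarrow> nu_last (gen \<alpha> :: 'r tensor) = nu_gen \<alpha>"
    using part2 by blast
  have h3: "\<forall>x \<in> (A0 :: 'r tensor set). nu_last x \<in> tensor_space 2"
    using part3 by blast
  have h4: "\<forall>x \<in> (A0 :: 'r tensor set). \<forall>y \<in> A0. nu_last (\<lambda>ys. x ys + y ys) = (\<lambda>ys. nu_last x ys + nu_last y ys)"
    using part4 by blast
  have h5: "\<forall>x \<in> (A0 :: 'r tensor set). \<forall>a. nu_last (\<lambda>ys. a * x ys) = (\<lambda>ys. a * nu_last x ys)"
    using part5 by blast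
  have h6: "\<forall>x \<in> (A0 :: 'r tensor set). \<forall>a b. nu_last x [b, a] = - nu_last x [a, b]"
    using part6 by blast
  have h7: "\<forall>x \<in> (A0 :: 'r tensor set). \<forall>a b c.
        nu_last (nu_last x) [a, b, c] + nu_last (nu_last x) [b, c, a]
          + nu_last (nu_last x) [c, a, b] = 0"
    using part7 by blast
  have h8: "\<forall>x \<in> (A0 :: 'r tensor set). \<exists>n\<ge>1. nu_pow n x = (\<lambda>_. 0)"
    using part8 by blast
  show ?thesis using h1 h2 h3 h4 h5 h6 h7 h8 by blast
qed


end
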